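(* Let $\rho=|\psi\rangle\langle\psi|$ be an $n$-qubit pure state, $S\subseteq[n]$ non-empty with $s=|S|$, and let $K\ge 2$, $L\ge 1$ be integers. Let $U_1,\dots,U_L$ be independent random local unitaries, each of the form $U_l=\bigotimes_{i\in S}U_{l,i}$ with independent Haar-random $U_{l,i}\in U(2)$ (identity outside $S$). Conditioned on $U_l$, let $\mathbf{Z}_{l,1},\dots,\mathbf{Z}_{l,K}\in\{0,1\}^s$ be independent outcomes, each distributed according to $P_{U_l}(\mathbf{z})=\operatorname{tr}\big(U_l\rho U_l^\dagger(|\mathbf{z}\rangle\langle\mathbf{z}|\otimes\mathbb{I}_{[n]\setminus S})\big)$ (computational-basis measurement of the qubits in $S$ after applying $U_l$). Define $$\hat S_l^{(K)}=\frac{1}{K(K-1)}\sum_{\substack{k,k'=1\\k\neq k'}}^K \mathbb{1}[\mathbf{Z}_{l,k}=\mathbf{Z}_{l,k'}],\qquad \hat{\mathcal{C}}_{|\psi\rangle}(S)=1-\Big(\tfrac32\Big)^s\frac1L\sum_{l=1}^L\hat S_l^{(K)}.$$ Then $\hat{\mathcal{C}}_{|\psi\rangle}(S)$ is an unbiased estimator of $\mathcal{C}_{|\psi\rangle}(S)$. Moreover, given a precision $\epsilon>0$ and confidence level $1-\delta\in(0,1)$, using at most $L=O\big((9/4)^s\log(1/\delta)/\epsilon^2\big)$ random unitaries (with an absolute implied constant) guarantees $\Pr\big[|\hat{\mathcal{C}}_{|\psi\rangle}(S)-\mathcal{C}_{|\psi\rangle}(S)|\ge\epsilon\big]\le\d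elta$.
   Context: $[n]=\{1,\dots,n\}$ labels the qubits. For an $n$-qubit pure state $|\psi\rangle$ and a non-empty $S\subseteq[n]$ with $s=|S|$, the concentratable entanglement is $\mathcal{C}_{|\psi\rangle}(S)=1-\frac{1}{2^s}\sum_{\alpha\subseteq S}\operatorname{tr}(\rho_\alpha^2)$, where $\rho_\alpha$ is the reduced state of $|\psi\rangle\langle\psi|$ on the qubits in $\alpha$, and $\operatorname{tr}(\rho_\emptyset^2):=1$. $\mathbb{1}[A]$ is $1$ if $A$ holds and $0$ otherwise. *)

theory Defs
  imports "HOL-Probability.Probability"
begin

text \<open>Qubits are labelled by natural numbers; [n] = {1..n}.
  A computational-basis string on a set A of qubits is an extensional
  function A -> bool.\<close>

type_synonym bits = "nat \<Rightarrow> bool"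
type_synonym qstate = "bits \<Rightarrow> complex"
type_synonym mat2 = "complex^2^2"

definition bitstrings :: "nat set \<Rightarrow> bits set" where
  "bitstrings A = PiE A (\<lambda>_. UNIV)"

definition pure_state :: "nat \<Rightarrow> qstate \<Rightarrow> bool" where
  "pure_state n \<psi> \<longleftrightarrow> (\<Sum>x\<in>bitstrings {1..n}. (cmod (\<psi> x))^2) = 1"

definition merge :: "nat set \<Rightarrow> bits \<Rightarrow> bits \<Rightarrow> bits" where
  "merge A x z = (\<lambda>i. if i \<in> A then x i else z i)"

text \<open>Matrix entries of the reduced state rho_alpha of |psi><psi| (partial trace over [n] - alpha).\<close>
definition reduced :: "nat \<Rightarrow> qstate \<Rightarrow> nat set \<Rightarrow> bits \<Rightarrow> bits \<Rightarrow> complex" where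
  "reduced n \<psi> \<alpha> x y =
     (\<Sum>z\<in>bitstrings ({1..n} - \<alpha>). \<psi> (merge \<alpha> x z) * cnj (\<psi> (merge \<alpha> y z)))"

text \<open>Purity tr(rho_alpha^2), with tr(rho_empty^2) := 1.\<close>
definition purity :: "nat \<Rightarrow> qstate \<Rightarrow> nat set \<Rightarrow> real" where
  "purity n \<psi> \<alpha> = (if \<alpha> = {} then 1 else
     Re (\<Sum>x\<in>bitstrings \<alpha>. \<Sum>y\<in>bitstrings \<alpha>. reduced n \<psi> \<alpha> x y * reduced n \<psi> \<alpha> y x))"

definition conc_ent :: "nat \<Rightarrow> qstate \<Rightarrow> nat set \<Rightarrow> real" where
  "conc_ent n \<psi> S = 1 - (1 / 2 ^ card S) * (\<Sum>\<alpha>\<in>Pow S. purity n \<psi> \<alpha>)"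

definition adjoint2 :: "mat2 \<Rightarrow> mat2" where
  "adjoint2 U = (\<chi> i j. cnj (U $ j $ i))"

definition U2 :: "mat2 set" where
  "U2 = {U. U ** adjoint2 U = mat 1 \<and> adjoint2 U ** U = mat 1}"

definition haar_U2 :: "mat2 measure \<Rightarrow> bool" where
  "haar_U2 \<mu> \<longleftrightarrow> prob_space \<mu> \<and> sets \<mu> = sets borel \<and> emeasure \<mu> U2 = 1 \<and>
     (\<forall>V\<in>U2. distr \<mu> borel (\<lambda>U. V ** U) = \<mu>)"

definition bidx :: "bool \<Rightarrow> 2" where
  "bidx b = (if b then 1 else 0)"

text \<open>(U psi)(x) for the local unitary U = tensor_{i in S} U_i (identity outside S).\<close>
definition apply_local :: "nat \<Rightarrow> nat set \<Rightarrow> (nat \<Rightarrow> mat2) \<Rightarrow> qstate \<Rightarrow> qstate" where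
  "apply_local n S U \<psi> x =
     (\<Sum>y\<in>bitstrings {1..n}.
        (\<Prod>i\<in>S. U i $ bidx (x i) $ bidx (y i)) *
        (if (\<forall>i\<in>{1..n} - S. y i = x i) then 1 else 0) * \<psi> y)"

text \<open>P_U(z) = tr(U rho U^dagger (|z><z| tensor I)), z a bit string on S.\<close>
definition outcome_prob :: "nat \<Rightarrow> nat set \<Rightarrow> (nat \<Rightarrow> mat2) \<Rightarrow> qstate \<Rightarrow> bits \<Rightarrow> real" where
  "outcome_prob n S U \<psi> z =
     (\<Sum>x\<in>bitstrings {1..n}. if restrict x S = z then (cmod (apply_local n S U \<psi> x))^2 else 0)"

text \<open>Joint law of one round: U = (U_i)_{i in S} i.i.d. Haar, and, given U,
  K i.i.d. outcomes Z_1..Z_K with law P_U.\<close>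
definition round_measure ::
  "nat \<Rightarrow> nat set \<Rightarrow> nat \<Rightarrow> mat2 measure \<Rightarrow> qstate \<Rightarrow> ((nat \<Rightarrow> mat2) \<times> (nat \<Rightarrow> bits)) measure" where
  "round_measure n S K \<mu> \<psi> =
     density (PiM S (\<lambda>_. \<mu>) \<Otimes>\<^sub>M count_space (PiE {1..K} (\<lambda>_. bitstrings S)))
       (\<lambda>(U, Z). ennreal (\<Prod>k\<in>{1..K}. outcome_prob n S U \<psi> (Z k)))"

definition exp_measure ::
  "nat \<Rightarrow> nat set \<Rightarrow> nat \<Rightarrow> nat \<Rightarrow> mat2 measure \<Rightarrow> qstate
   \<Rightarrow> (nat \<Rightarrow> (nat \<Rightarrow> mat2) \<times> (nat \<Rightarrow> bits)) measure" where
  "exp_measure n S K L \<mu> \<psi> = PiM {1..L} (\<lambda>_. round_measure n S K \<mu> \<psi>)"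

definition S_hat :: "nat \<Rightarrow> (nat \<Rightarrow> bits) \<Rightarrow> real" where
  "S_hat K Z = (1 / (real K * (real K - 1))) *
     (\<Sum>k\<in>{1..K}. \<Sum>k'\<in>{1..K} - {k}. of_bool (Z k = Z k'))"

definition C_hat :: "nat set \<Rightarrow> nat \<Rightarrow> nat \<Rightarrow> (nat \<Rightarrow> (nat \<Rightarrow> mat2) \<times> (nat \<Rightarrow> bits)) \<Rightarrow> real" where
  "C_hat S K L \<omega> = 1 - (3/2) ^ card S * (1 / real L) * (\<Sum>l\<in>{1..L}. S_hat K (snd (\<omega> l)))"

end

theory Submission
  imports Defs
begin

lemma design_scalar:
  fixes p1 p2 Q1 Q2 r1 r2 T1 T2 :: complex
  shows "p1*Q1*r1*T1 + p2*Q2*r2*T2 + (1/4)*((p1+p2)*(Q1+Q2)*(r1+r2)*(T1+T2) + (p1-p2)*(Q1-Q2)*(r1-r2)*(T1-T2))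
   + (1/4)*((p1 - \<i>*p2)*(Q1 + \<i>*Q2)*(r1 - \<i>*r2)*(T1 + \<i>*T2) + (p1 + \<i>*p2)*(Q1 - \<i>*Q2)*(r1+ \<i>*r2)*(T1 - \<i>*T2))
   = (Q1*p1 + Q2*p2)*(T1*r1 + T2*r2) + (T1*p1 + T2*p2)*(Q1*r1 + Q2*r2)"
  by (simp add: algebra_simps power2_eq_square)

definition sq2 :: complex where "sq2 = complex_of_real (1 / sqrt 2)"

lemma sq2_sq: "sq2 * sq2 = 1/2"
proof -
  have "(1/sqrt 2) * (1/sqrt 2) = (1/2::real)" by (simp add: field_simps)
  hence "complex_of_real ((1/sqrt 2) * (1/sqrt 2)) = 1/2" by simp
  thus ?thesis unfolding sq2_def by (simp only: of_real_mult)
qed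

lemma cnj_sq2[simp]: "cnj sq2 = sq2" unfolding sq2_def by simp

definition Hm :: mat2 where
  "Hm = vector [vector [sq2, sq2], vector [sq2, - sq2]]"
definition Ym :: mat2 where
  "Ym = vector [vector [sq2, - \<i> * sq2], vector [sq2, \<i> * sq2]]"
definition Wm :: "nat \<Rightarrow> mat2" where
  "Wm j = (if j = 0 then mat 1 else if j = 1 then Hm else Ym)"

definition gq :: "mat2 \<Rightarrow> bool \<Rightarrow> bool \<Rightarrow> bool \<Rightarrow> bool \<Rightarrow> bool \<Rightarrow> complex" where
  "gq V z a b c d = V $ bidx z $ bidx a * cnj (V $ bidx z $ bidx b) * V $ bidx z $ bidx c * cnj (V $ bidx z $ bidx d)"

lemma sum_bool_bidx: "(\<Sum>z\<in>UNIV. h (bidx z)) = h 1 + h 2"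
proof -
  have e: "(2::2) = 0" by simp
  show ?thesis by (simp add: UNIV_bool bidx_def e add.commute)
qed

lemma bidx_T: "bidx True = 1" by (simp add: bidx_def)
lemma bidx_F: "bidx False = 2" by (simp add: bidx_def)
lemma sum_UNIV_bool: "(\<Sum>z\<in>UNIV. f z) = f True + f False" for f :: "bool \<Rightarrow> 'a::comm_monoid_add"
  by (simp add: UNIV_bool add.commute)

lemma sum_2': "(\<Sum>k\<in>(UNIV::2 set). h k) = h 1 + h 2"
  by (simp add: sum_2)

lemma bidx_inj[simp]: "bidx a = bidx b \<longleftrightarrow> a = b"
  by (auto simp: bidx_def)

lemma unitary_cols:
  assumes "U \<in> U2"
  shows "cnj (U $ 1 $ a) * U $ 1 $ b + cnj (U $ 2 $ a) * U $ 2 $ b = (if a = b then 1 else 0)"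
proof -
  have "(adjoint2 U ** U) $ a $ b = mat 1 $ a $ b" using assms by (simp add: U2_def)
  thus ?thesis by (simp add: matrix_matrix_mult_def adjoint2_def sum_2' mat_def)
qed

lemma Wm_entries:
  "(Wm 1 ** U)$1$A = sq2 * (U$1$A + U$2$A)"
  "(Wm 1 ** U)$2$A = sq2 * (U$1$A - U$2$A)"
  "(Wm 2 ** U)$1$A = sq2 * (U$1$A - \<i> * U$2$A)"
  "(Wm 2 ** U)$2$A = sq2 * (U$1$A + \<i> * U$2$A)"
  by (simp_all add: Wm_def Hm_def Ym_def matrix_matrix_mult_def sum_2' algebra_simps)

lemma Wm0: "Wm 0 ** U = U" by (simp add: Wm_def matrix_mul_lid)

lemma sum3: "(\<Sum>j<3. f j) = f 0 + f 1 + f (2::nat)"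
  by (simp add: numeral_3_eq_3 numeral_2_eq_2)

lemma four: "(q * x) * (q * y) * (q * z) * (q * w) = (q * q) * (q * q) * (x * y * z * w)" for q :: complex
  by (simp add: ac_simps)

lemma single_qubit_idx:
  shows "(\<Sum>j<3. \<Sum>z\<in>(UNIV::2 set). (Wm j ** U)$z$A * cnj ((Wm j ** U)$z$B) * (Wm j ** U)$z$C * cnj ((Wm j ** U)$z$D)) =
    U$1$A*cnj(U$1$B)*U$1$C*cnj(U$1$D) + U$2$A*cnj(U$2$B)*U$2$C*cnj(U$2$D)
   + (1/4)*((U$1$A+U$2$A)*(cnj(U$1$B)+cnj(U$2$B))*(U$1$C+U$2$C)*(cnj(U$1$D)+cnj(U$2$D))
     + (U$1$A-U$2$A)*(cnj(U$1$B)-cnj(U$2$B))*(U$1$C-U$2$C)*(cnj(U$1$D)-cnj(U$2$D)))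
   + (1/4)*((U$1$A - \<i>*U$2$A)*(cnj(U$1$B) + \<i>*cnj(U$2$B))*(U$1$C - \<i>*U$2$C)*(cnj(U$1$D) + \<i>*cnj(U$2$D))
     + (U$1$A + \<i>*U$2$A)*(cnj(U$1$B) - \<i>*cnj(U$2$B))*(U$1$C + \<i>*U$2$C)*(cnj(U$1$D) - \<i>*cnj(U$2$D)))"
  apply (simp only: sum3 sum_2' Wm0 Wm_entries complex_cnj_mult four cnj_sq2 sq2_sq)
  apply (simp add: algebra_simps)
  done
lemma single_qubit:
  assumes U: "U \<in> U2"
  shows "(\<Sum>j<3. \<Sum>z\<in>UNIV. gq (Wm j ** U) z a b c d) =
     of_bool (a = b \<and> c = d) + of_bool (a = d \<and> c = b)"
proof -
  have "(\<Sum>j<3. \<Sum>z\<in>UNIV. gq (Wm j ** U) z a b c d) =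
     (\<Sum>j<3. \<Sum>z\<in>(UNIV::2 set). (Wm j ** U)$z$bidx a * cnj ((Wm j ** U)$z$bidx b) * (Wm j ** U)$z$bidx c * cnj ((Wm j ** U)$z$bidx d))"
    unfolding gq_def by (simp only: sum_UNIV_bool sum_2' bidx_T bidx_F)
  also have "\<dots> = (cnj(U$1$bidx b)*U$1$bidx a + cnj(U$2$bidx b)*U$2$bidx a)*(cnj(U$1$bidx d)*U$1$bidx c + cnj(U$2$bidx d)*U$2$bidx c)
     + (cnj(U$1$bidx d)*U$1$bidx a + cnj(U$2$bidx d)*U$2$bidx a)*(cnj(U$1$bidx b)*U$1$bidx c + cnj(U$2$bidx b)*U$2$bidx c)"
    unfolding single_qubit_idx by (rule design_scalar)
  also have "\<dots> = of_bool (a = b \<and> c = d) + of_bool (a = d \<and> c = b)"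
    unfolding unitary_cols[OF U] by auto
  finally show ?thesis .
qed

lemma bitstrings_iff: "x \<in> bitstrings A \<longleftrightarrow> (\<forall>i. i \<notin> A \<longrightarrow> x i = undefined)"
  by (auto simp: bitstrings_def PiE_def extensional_def)

lemma finite_bitstrings[simp]: "finite A \<Longrightarrow> finite (bitstrings A)"
  by (simp add: bitstrings_def finite_PiE)

lemma merge_in_bitstrings: "x \<in> bitstrings A \<Longrightarrow> y \<in> bitstrings B \<Longrightarrow> merge A x y \<in> bitstrings (A \<union> B)"
  by (auto simp: bitstrings_iff merge_def)

lemma merge_in_bitstrings': "x \<in> bitstrings A \<Longrightarrow> y \<in> bitstrings B \<Longrightarrow> C = A \<union> B \<Longrightarrow> merge A x y \<in> bitstrings C"
  using merge_in_bitstrings by blast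

lemma restrict_in_bitstrings: "restrict x A \<in> bitstrings A"
  by (auto simp: bitstrings_iff)

lemma sum_bitstrings_split:
  assumes "finite A" "finite B" "A \<inter> B = {}"
  shows "(\<Sum>w\<in>bitstrings (A \<union> B). f w) = (\<Sum>x\<in>bitstrings A. \<Sum>y\<in>bitstrings B. f (merge A x y))"
proof -
  have bij: "bij_betw (\<lambda>(x,y). merge A x y) (bitstrings A \<times> bitstrings B) (bitstrings (A \<union> B))"
  proof (rule bij_betw_byWitness[where f' = "\<lambda>w. (restrict w A, restrict w B)"])
    show "\<forall>a\<in>bitstrings A \<times> bitstrings B. (\<lambda>w. (restrict w A, restrict w B)) ((\<lambda>(x, y). merge A x y) a) = a"
      using assms(3) by (force simp: bitstrings_iff merge_def restrict_def fun_eq_iff)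
    show "\<forall>a'\<in>bitstrings (A \<union> B). (\<lambda>(x, y). merge A x y) (restrict a' A, restrict a' B) = a'"
      by (auto simp: bitstrings_iff merge_def restrict_def fun_eq_iff)
    show "(\<lambda>(x, y). merge A x y) ` (bitstrings A \<times> bitstrings B) \<subseteq> bitstrings (A \<union> B)"
      using merge_in_bitstrings by auto
    show "(\<lambda>w. (restrict w A, restrict w B)) ` bitstrings (A \<union> B) \<subseteq> bitstrings A \<times> bitstrings B"
      using restrict_in_bitstrings by auto
  qed
  have "(\<Sum>x\<in>bitstrings A. \<Sum>y\<in>bitstrings B. f (merge A x y)) = (\<Sum>(x,y)\<in>bitstrings A \<times> bitstrings B. f (merge A x y))"
    by (rule sum.cartesian_product)
  also have "\<dots> = (\<Sum>w\<in>bitstrings (A \<union> B). f w)"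
    using sum.reindex_bij_betw[OF bij, of f] by (simp add: case_prod_unfold)
  finally show ?thesis by simp
qed

lemma sum_bitstrings_split':
  assumes "finite A" "finite B" "A \<inter> B = {}" "C = A \<union> B"
  shows "(\<Sum>w\<in>bitstrings C. f w) = (\<Sum>x\<in>bitstrings A. \<Sum>y\<in>bitstrings B. f (merge A x y))"
  using sum_bitstrings_split[OF assms(1-3)] assms(4) by simp

lemma merge_merge_same: "merge A (merge A y u') (merge A x u) = merge A y u"
  by (auto simp: merge_def)

lemma merge_nested: "\<alpha> \<subseteq> S \<Longrightarrow> merge \<alpha> x (merge (S - \<alpha>) u e) = merge S (merge \<alpha> x u) e"
  by (auto simp: merge_def fun_eq_iff)

lemma restrict_merge: "x \<in> bitstrings A \<Longrightarrow> restrict (merge A x y) A = x"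
  by (auto simp: bitstrings_iff merge_def fun_eq_iff)

lemma merge_empty[simp]: "merge {} x y = y"
  by (simp add: merge_def)

lemma reduced_step:
  assumes "\<alpha> \<subseteq> S" "S \<subseteq> {1..n}"
  shows "reduced n \<psi> \<alpha> x y = (\<Sum>u\<in>bitstrings (S - \<alpha>). reduced n \<psi> S (merge \<alpha> x u) (merge \<alpha> y u))"
proof -
  have fin: "finite S" using assms finite_subset by blast
  have "reduced n \<psi> \<alpha> x y = (\<Sum>u\<in>bitstrings (S - \<alpha>). \<Sum>e\<in>bitstrings ({1..n} - S).
        \<psi> (merge \<alpha> x (merge (S - \<alpha>) u e)) * cnj (\<psi> (merge \<alpha> y (merge (S - \<alpha>) u e))))"
    unfolding reduced_def
    by (rule sum_bitstrings_split') (use assms fin in auto)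
  also have "\<dots> = (\<Sum>u\<in>bitstrings (S - \<alpha>). reduced n \<psi> S (merge \<alpha> x u) (merge \<alpha> y u))"
    unfolding reduced_def merge_nested[OF assms(1)] ..
  finally show ?thesis .
qed

lemma purity_swap:
  assumes "\<alpha> \<subseteq> S" "S \<subseteq> {1..n}"
  shows "(\<Sum>a\<in>bitstrings S. \<Sum>c\<in>bitstrings S. reduced n \<psi> S a (merge \<alpha> c a) * reduced n \<psi> S c (merge \<alpha> a c))
       = (\<Sum>x\<in>bitstrings \<alpha>. \<Sum>y\<in>bitstrings \<alpha>. reduced n \<psi> \<alpha> x y * reduced n \<psi> \<alpha> y x)"
proof -
  have fin: "finite S" "finite \<alpha>" using assms by (auto intro: finite_subset[OF _ finite_atLeastAtMost])
  let ?r = "reduced n \<psi> S"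
  have split: "(\<Sum>a\<in>bitstrings S. f a) = (\<Sum>x\<in>bitstrings \<alpha>. \<Sum>u\<in>bitstrings (S - \<alpha>). f (merge \<alpha> x u))" for f
    by (rule sum_bitstrings_split') (use assms fin in auto)
  have "(\<Sum>a\<in>bitstrings S. \<Sum>c\<in>bitstrings S. ?r a (merge \<alpha> c a) * ?r c (merge \<alpha> a c))
     = (\<Sum>x\<in>bitstrings \<alpha>. \<Sum>u\<in>bitstrings (S - \<alpha>). \<Sum>y\<in>bitstrings \<alpha>. \<Sum>u'\<in>bitstrings (S - \<alpha>).
          ?r (merge \<alpha> x u) (merge \<alpha> y u) * ?r (merge \<alpha> y u') (merge \<alpha> x u'))"
    by (simp add: split merge_merge_same)
  also have "\<dots> = (\<Sum>x\<in>bitstrings \<alpha>. \<Sum>y\<in>bitstrings \<alpha>. \<Sum>u\<in>bitstrings (S - \<alpha>). \<Sum>u'\<in>bitstrings (S - \<alpha>).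
          ?r (merge \<alpha> x u) (merge \<alpha> y u) * ?r (merge \<alpha> y u') (merge \<alpha> x u'))"
    by (rule sum.cong[OF refl], rule sum.swap)
  also have "\<dots> = (\<Sum>x\<in>bitstrings \<alpha>. \<Sum>y\<in>bitstrings \<alpha>. reduced n \<psi> \<alpha> x y * reduced n \<psi> \<alpha> y x)"
    by (simp add: reduced_step[OF assms] sum_product)
  finally show ?thesis .
qed

definition Aq :: "nat set \<Rightarrow> (nat \<Rightarrow> mat2) \<Rightarrow> bits \<Rightarrow> bits \<Rightarrow> complex" where
  "Aq S U z a = (\<Prod>i\<in>S. U i $ bidx (z i) $ bidx (a i))"

lemma fin_sub: "S \<subseteq> {1..(n::nat)} \<Longrightarrow> finite S"
  by (metis finite_atLeastAtMost finite_subset)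

lemma bits_eq_on: "e \<in> bitstrings R \<Longrightarrow> e' \<in> bitstrings R \<Longrightarrow> (\<forall>i\<in>R. e' i = e i) \<longleftrightarrow> e' = e"
  by (auto simp: bitstrings_iff fun_eq_iff)

lemma apply_local_merge:
  assumes S: "S \<subseteq> {1..n}" and z: "z \<in> bitstrings S" and e: "e \<in> bitstrings ({1..n} - S)"
  shows "apply_local n S U \<psi> (merge S z e) = (\<Sum>a\<in>bitstrings S. Aq S U z a * \<psi> (merge S a e))"
proof -
  let ?R = "{1..n} - S"
  have finS: "finite S" using fin_sub[OF S] .
  have "apply_local n S U \<psi> (merge S z e) = (\<Sum>a\<in>bitstrings S. \<Sum>e'\<in>bitstrings ?R.
      (\<Prod>i\<in>S. U i $ bidx (merge S z e i) $ bidx (merge S a e' i)) *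
        (if (\<forall>i\<in>?R. merge S a e' i = merge S z e i) then 1 else 0) * \<psi> (merge S a e'))"
    unfolding apply_local_def by (rule sum_bitstrings_split') (use S finS in auto)
  also have "\<dots> = (\<Sum>a\<in>bitstrings S. \<Sum>e'\<in>bitstrings ?R. if e' = e then Aq S U z a * \<psi> (merge S a e) else 0)"
  proof (intro sum.cong refl)
    fix a e' assume a: "a \<in> bitstrings S" and e': "e' \<in> bitstrings ?R"
    have p: "(\<Prod>i\<in>S. U i $ bidx (merge S z e i) $ bidx (merge S a e' i)) = Aq S U z a"
      unfolding Aq_def by (rule prod.cong) (auto simp: merge_def)
    have q: "(\<forall>i\<in>?R. merge S a e' i = merge S z e i) \<longleftrightarrow> e' = e"
      using bits_eq_on[OF e e'] by (auto simp: merge_def)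
    show "(\<Prod>i\<in>S. U i $ bidx (merge S z e i) $ bidx (merge S a e' i)) *
        (if (\<forall>i\<in>?R. merge S a e' i = merge S z e i) then 1 else 0) * \<psi> (merge S a e') =
        (if e' = e then Aq S U z a * \<psi> (merge S a e) else 0)"
      unfolding p q by auto
  qed
  also have "\<dots> = (\<Sum>a\<in>bitstrings S. Aq S U z a * \<psi> (merge S a e))"
    using e by (simp add: sum.delta' finS)
  finally show ?thesis .
qed

lemma outcome_prob_merge:
  assumes S: "S \<subseteq> {1..n}" and z: "z \<in> bitstrings S"
  shows "outcome_prob n S U \<psi> z = (\<Sum>e\<in>bitstrings ({1..n} - S). (cmod (apply_local n S U \<psi> (merge S z e)))^2)"
proof -
  let ?R = "{1..n} - S"
  have finS: "finite S" using fin_sub[OF S] .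
  have "outcome_prob n S U \<psi> z = (\<Sum>z'\<in>bitstrings S. \<Sum>e\<in>bitstrings ?R.
      if restrict (merge S z' e) S = z then (cmod (apply_local n S U \<psi> (merge S z' e)))^2 else 0)"
    unfolding outcome_prob_def by (rule sum_bitstrings_split') (use S finS in auto)
  also have "\<dots> = (\<Sum>z'\<in>bitstrings S. if z' = z then (\<Sum>e\<in>bitstrings ?R. (cmod (apply_local n S U \<psi> (merge S z' e)))^2) else 0)"
    by (intro sum.cong refl) (auto simp: restrict_merge)
  also have "\<dots> = (\<Sum>e\<in>bitstrings ?R. (cmod (apply_local n S U \<psi> (merge S z e)))^2)"
    using z by (simp add: sum.delta' finS)
  finally show ?thesis .
qed

lemma outcome_prob_complex:
  assumes S: "S \<subseteq> {1..n}" and z: "z \<in> bitstrings S"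
  shows "complex_of_real (outcome_prob n S U \<psi> z) =
    (\<Sum>a\<in>bitstrings S. \<Sum>b\<in>bitstrings S. Aq S U z a * cnj (Aq S U z b) * reduced n \<psi> S a b)"
proof -
  let ?R = "{1..n} - S"
  have finS: "finite S" using fin_sub[OF S] .
  have "complex_of_real (outcome_prob n S U \<psi> z) =
     (\<Sum>e\<in>bitstrings ?R. \<Sum>a\<in>bitstrings S. \<Sum>b\<in>bitstrings S. (Aq S U z a * \<psi> (merge S a e)) * cnj (Aq S U z b * \<psi> (merge S b e)))"
    unfolding outcome_prob_merge[OF S z] of_real_sum
    by (intro sum.cong refl) (simp only: complex_norm_square apply_local_merge[OF S z] cnj_sum sum_product)
  also have "\<dots> = (\<Sum>a\<in>bitstrings S. \<Sum>b\<in>bitstrings S. \<Sum>e\<in>bitstrings ?R. (Aq S U z a * \<psi> (merge S a e)) * cnj (Aq S U z b * \<psi> (merge S b e)))"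
    by (subst sum.swap, rule sum.cong[OF refl], rule sum.swap)
  also have "\<dots> = (\<Sum>a\<in>bitstrings S. \<Sum>b\<in>bitstrings S. Aq S U z a * cnj (Aq S U z b) * reduced n \<psi> S a b)"
    unfolding reduced_def by (simp add: sum_distrib_left mult_ac)
  finally show ?thesis .
qed

definition Gq :: "nat set \<Rightarrow> (nat \<Rightarrow> mat2) \<Rightarrow> bits \<Rightarrow> bits \<Rightarrow> bits \<Rightarrow> bits \<Rightarrow> complex" where
  "Gq S U a b c d = (\<Prod>i\<in>S. \<Sum>z\<in>UNIV. gq (U i) z (a i) (b i) (c i) (d i))"

lemma prod_of_bool: "finite A \<Longrightarrow> (\<Prod>i\<in>A. (of_bool (P i) :: 'a::comm_semiring_1)) = of_bool (\<forall>i\<in>A. P i)"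
  by (induction A rule: finite_induct) auto

lemma sum_Aq4:
  assumes "finite S"
  shows "(\<Sum>z\<in>bitstrings S. Aq S U z a * cnj (Aq S U z b) * Aq S U z c * cnj (Aq S U z d)) = Gq S U a b c d"
proof -
  have "Gq S U a b c d = (\<Sum>g\<in>PiE S (\<lambda>_. UNIV). \<Prod>i\<in>S. gq (U i) (g i) (a i) (b i) (c i) (d i))"
    unfolding Gq_def by (rule prod_sum_PiE) (use assms in auto)
  also have "\<dots> = (\<Sum>z\<in>bitstrings S. Aq S U z a * cnj (Aq S U z b) * Aq S U z c * cnj (Aq S U z d))"
    unfolding bitstrings_def Aq_def gq_def by (simp add: prod.distrib)
  finally show ?thesis by simp
qed

lemma sum_Aq2:
  assumes "finite S" and U: "\<And>i. i \<in> S \<Longrightarrow> U i \<in> U2" and a: "a \<in> bitstrings S" and b: "b \<in> bitstrings S"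
  shows "(\<Sum>z\<in>bitstrings S. Aq S U z a * cnj (Aq S U z b)) = of_bool (a = b)"
proof -
  have "(\<Prod>i\<in>S. \<Sum>z\<in>UNIV. U i $ bidx z $ bidx (a i) * cnj (U i $ bidx z $ bidx (b i)))
      = (\<Sum>g\<in>PiE S (\<lambda>_. UNIV). \<Prod>i\<in>S. U i $ bidx (g i) $ bidx (a i) * cnj (U i $ bidx (g i) $ bidx (b i)))"
    by (rule prod_sum_PiE) (use assms in auto)
  also have "\<dots> = (\<Sum>z\<in>bitstrings S. Aq S U z a * cnj (Aq S U z b))"
    unfolding bitstrings_def Aq_def by (simp add: prod.distrib)
  finally have "(\<Sum>z\<in>bitstrings S. Aq S U z a * cnj (Aq S U z b)) =
      (\<Prod>i\<in>S. \<Sum>z\<in>UNIV. U i $ bidx z $ bidx (a i) * cnj (U i $ bidx z $ bidx (b i)))" by simp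
  also have "\<dots> = (\<Prod>i\<in>S. of_bool (a i = b i))"
  proof (rule prod.cong[OF refl])
    fix i assume i: "i \<in> S"
    have "cnj (U i $ 1 $ bidx (b i)) * U i $ 1 $ bidx (a i) + cnj (U i $ 2 $ bidx (b i)) * U i $ 2 $ bidx (a i)
        = (if bidx (b i) = bidx (a i) then 1 else 0)" by (rule unitary_cols[OF U[OF i]])
    thus "(\<Sum>z\<in>UNIV. U i $ bidx z $ bidx (a i) * cnj (U i $ bidx z $ bidx (b i))) = of_bool (a i = b i)"
      by (auto simp: sum_UNIV_bool bidx_T bidx_F mult.commute)
  qed
  also have "\<dots> = of_bool (\<forall>i\<in>S. a i = b i)" by (rule prod_of_bool[OF assms(1)])
  also have "(\<forall>i\<in>S. a i = b i) \<longleftrightarrow> a = b" using a b by (auto simp: bitstrings_iff fun_eq_iff)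
  finally show ?thesis .
qed

lemma sq_expand:
  assumes S: "S \<subseteq> {1..n}"
  shows "complex_of_real (\<Sum>z\<in>bitstrings S. (outcome_prob n S U \<psi> z)^2) =
    (\<Sum>a\<in>bitstrings S. \<Sum>c\<in>bitstrings S. \<Sum>b\<in>bitstrings S. \<Sum>d\<in>bitstrings S.
        Gq S U a b c d * reduced n \<psi> S a b * reduced n \<psi> S c d)"
proof -
  have finS: "finite S" using fin_sub[OF S] .
  let ?B = "bitstrings S"
  let ?X = "\<lambda>z a b. Aq S U z a * cnj (Aq S U z b) * reduced n \<psi> S a b"
  have "complex_of_real (\<Sum>z\<in>?B. (outcome_prob n S U \<psi> z)^2) =
     (\<Sum>z\<in>?B. (\<Sum>a\<in>?B. \<Sum>b\<in>?B. ?X z a b) * (\<Sum>c\<in>?B. \<Sum>d\<in>?B. ?X z c d))"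
    unfolding of_real_sum by (intro sum.cong refl) (simp add: power2_eq_square outcome_prob_complex[OF S])
  also have "\<dots> = (\<Sum>z\<in>?B. \<Sum>a\<in>?B. \<Sum>c\<in>?B. \<Sum>b\<in>?B. \<Sum>d\<in>?B. ?X z a b * ?X z c d)"
    by (simp only: sum_product)
  also have "\<dots> = (\<Sum>a\<in>?B. \<Sum>z\<in>?B. \<Sum>c\<in>?B. \<Sum>b\<in>?B. \<Sum>d\<in>?B. ?X z a b * ?X z c d)"
    by (rule sum.swap)
  also have "\<dots> = (\<Sum>a\<in>?B. \<Sum>c\<in>?B. \<Sum>z\<in>?B. \<Sum>b\<in>?B. \<Sum>d\<in>?B. ?X z a b * ?X z c d)"
    by (rule sum.cong[OF refl], rule sum.swap)
  also have "\<dots> = (\<Sum>a\<in>?B. \<Sum>c\<in>?B. \<Sum>b\<in>?B. \<Sum>z\<in>?B. \<Sum>d\<in>?B. ?X z a b * ?X z c d)"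
    by (rule sum.cong[OF refl], rule sum.cong[OF refl], rule sum.swap)
  also have "\<dots> = (\<Sum>a\<in>?B. \<Sum>c\<in>?B. \<Sum>b\<in>?B. \<Sum>d\<in>?B. \<Sum>z\<in>?B. ?X z a b * ?X z c d)"
    by (rule sum.cong[OF refl], rule sum.cong[OF refl], rule sum.cong[OF refl], rule sum.swap)
  also have "\<dots> = (\<Sum>a\<in>?B. \<Sum>c\<in>?B. \<Sum>b\<in>?B. \<Sum>d\<in>?B.
        Gq S U a b c d * reduced n \<psi> S a b * reduced n \<psi> S c d)"
  proof (intro sum.cong refl)
    fix a b c d
    have "(\<Sum>z\<in>?B. ?X z a b * ?X z c d) = (\<Sum>z\<in>?B. (Aq S U z a * cnj (Aq S U z b) * Aq S U z c * cnj (Aq S U z d)) * (reduced n \<psi> S a b * reduced n \<psi> S c d))"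
      by (rule sum.cong) (simp_all add: mult_ac)
    also have "\<dots> = Gq S U a b c d * reduced n \<psi> S a b * reduced n \<psi> S c d"
      by (subst sum_distrib_right[symmetric], subst sum_Aq4[OF finS], simp add: mult.assoc)
    finally show "(\<Sum>z\<in>?B. ?X z a b * ?X z c d) = Gq S U a b c d * reduced n \<psi> S a b * reduced n \<psi> S c d" .
  qed
  finally show ?thesis .
qed

lemma sum_outcome_prob:
  assumes S: "S \<subseteq> {1..n}" and U: "\<And>i. i \<in> S \<Longrightarrow> U i \<in> U2" and pure: "pure_state n \<psi>"
  shows "(\<Sum>z\<in>bitstrings S. outcome_prob n S U \<psi> z) = 1"
proof -
  have finS: "finite S" using fin_sub[OF S] .
  let ?B = "bitstrings S"
  have "complex_of_real (\<Sum>z\<in>?B. outcome_prob n S U \<psi> z) =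
     (\<Sum>z\<in>?B. \<Sum>a\<in>?B. \<Sum>b\<in>?B. Aq S U z a * cnj (Aq S U z b) * reduced n \<psi> S a b)"
    unfolding of_real_sum by (intro sum.cong refl) (simp add: outcome_prob_complex[OF S])
  also have "\<dots> = (\<Sum>a\<in>?B. \<Sum>z\<in>?B. \<Sum>b\<in>?B. Aq S U z a * cnj (Aq S U z b) * reduced n \<psi> S a b)"
    by (rule sum.swap)
  also have "\<dots> = (\<Sum>a\<in>?B. \<Sum>b\<in>?B. \<Sum>z\<in>?B. Aq S U z a * cnj (Aq S U z b) * reduced n \<psi> S a b)"
    by (rule sum.cong[OF refl], rule sum.swap)
  also have "\<dots> = (\<Sum>a\<in>?B. \<Sum>b\<in>?B. of_bool (a = b) * reduced n \<psi> S a b)"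
    by (intro sum.cong refl) (simp add: sum_Aq2[OF finS U] flip: sum_distrib_right)
  also have "\<dots> = (\<Sum>a\<in>?B. reduced n \<psi> S a a)"
    by (intro sum.cong refl) (simp add: of_bool_def if_distrib[where f = "\<lambda>x. x * _"] finS cong: if_cong)
  also have "\<dots> = (\<Sum>a\<in>?B. \<Sum>e\<in>bitstrings ({1..n} - S). complex_of_real ((cmod (\<psi> (merge S a e)))^2))"
    unfolding reduced_def by (simp only: complex_norm_square)
  also have "\<dots> = (\<Sum>w\<in>bitstrings {1..n}. complex_of_real ((cmod (\<psi> w))^2))"
    by (rule sum_bitstrings_split'[symmetric]) (use S finS in auto)
  also have "\<dots> = 1" using pure unfolding pure_state_def of_real_sum[symmetric] by simp
  finally show ?thesis by (simp only: of_real_eq_1_iff)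
qed

lemma avg_Gq:
  assumes finS: "finite S" and U: "\<And>i. i \<in> S \<Longrightarrow> U i \<in> U2"
  shows "(\<Sum>J\<in>PiE S (\<lambda>_. {..<3}). Gq S (\<lambda>i. Wm (J i) ** U i) a b c d) =
     (\<Prod>i\<in>S. of_bool (a i = d i \<and> c i = b i) + of_bool (a i = b i \<and> c i = d i))"
proof -
  have "(\<Prod>i\<in>S. of_bool (a i = d i \<and> c i = b i) + of_bool (a i = b i \<and> c i = d i)) =
     (\<Prod>i\<in>S. \<Sum>j<3. \<Sum>z\<in>UNIV. gq (Wm j ** U i) z (a i) (b i) (c i) (d i))"
    by (rule prod.cong[OF refl]) (simp add: single_qubit[OF U] add.commute)
  also have "\<dots> = (\<Sum>J\<in>PiE S (\<lambda>_. {..<3}). \<Prod>i\<in>S. \<Sum>z\<in>UNIV. gq (Wm (J i) ** U i) z (a i) (b i) (c i) (d i))"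
    by (rule prod_sum_PiE) (use finS in auto)
  also have "\<dots> = (\<Sum>J\<in>PiE S (\<lambda>_. {..<3}). Gq S (\<lambda>i. Wm (J i) ** U i) a b c d)"
    unfolding Gq_def ..
  finally show ?thesis by simp
qed

lemma delta_prod:
  assumes finS: "finite S" and al: "\<alpha> \<subseteq> S" and bits: "a \<in> bitstrings S" "b \<in> bitstrings S" "c \<in> bitstrings S" "d \<in> bitstrings S"
  shows "(\<Prod>i\<in>\<alpha>. of_bool (a i = d i \<and> c i = b i)) * (\<Prod>i\<in>S - \<alpha>. of_bool (a i = b i \<and> c i = d i))
     = (of_bool (b = merge \<alpha> c a \<and> d = merge \<alpha> a c) :: complex)"
proof -
  have fa: "finite \<alpha>" using finite_subset[OF al finS] .
  have "(\<Prod>i\<in>\<alpha>. of_bool (a i = d i \<and> c i = b i)) * (\<Prod>i\<in>S - \<alpha>. of_bool (a i = b i \<and> c i = d i))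
     = (of_bool ((\<forall>i\<in>\<alpha>. a i = d i \<and> c i = b i) \<and> (\<forall>i\<in>S - \<alpha>. a i = b i \<and> c i = d i)) :: complex)"
    using fa finS by (simp add: prod_of_bool)
  also have "((\<forall>i\<in>\<alpha>. a i = d i \<and> c i = b i) \<and> (\<forall>i\<in>S - \<alpha>. a i = b i \<and> c i = d i)) \<longleftrightarrow>
      (b = merge \<alpha> c a \<and> d = merge \<alpha> a c)" (is "?L \<longleftrightarrow> ?R")
  proof
    assume L: ?L
    have "b i = merge \<alpha> c a i \<and> d i = merge \<alpha> a c i" for i
    proof (cases "i \<in> S")
      case True
      then show ?thesis using L by (cases "i \<in> \<alpha>") (auto simp: merge_def)
    next
      case False
      hence "i \<notin> \<alpha>" using al by blast
      then show ?thesis using False bits unfolding bitstrings_iff merge_def by simp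
    qed
    thus ?R by (simp add: fun_eq_iff)
  next
    assume ?R thus ?L by (simp add: merge_def)
  qed
  finally show ?thesis .
qed

lemma sum_pull_in4:
  "(\<Sum>j\<in>J. \<Sum>a\<in>A. \<Sum>c\<in>C. \<Sum>b\<in>B. \<Sum>d\<in>D. f j a c b d) = (\<Sum>a\<in>A. \<Sum>c\<in>C. \<Sum>b\<in>B. \<Sum>d\<in>D. \<Sum>j\<in>J. f j a c b d)"
proof -
  have "(\<Sum>j\<in>J. \<Sum>a\<in>A. \<Sum>c\<in>C. \<Sum>b\<in>B. \<Sum>d\<in>D. f j a c b d) = (\<Sum>a\<in>A. \<Sum>j\<in>J. \<Sum>c\<in>C. \<Sum>b\<in>B. \<Sum>d\<in>D. f j a c b d)"
    by (rule sum.swap)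
  also have "\<dots> = (\<Sum>a\<in>A. \<Sum>c\<in>C. \<Sum>j\<in>J. \<Sum>b\<in>B. \<Sum>d\<in>D. f j a c b d)"
    by (rule sum.cong[OF refl], rule sum.swap)
  also have "\<dots> = (\<Sum>a\<in>A. \<Sum>c\<in>C. \<Sum>b\<in>B. \<Sum>j\<in>J. \<Sum>d\<in>D. f j a c b d)"
    by (rule sum.cong[OF refl], rule sum.cong[OF refl], rule sum.swap)
  also have "\<dots> = (\<Sum>a\<in>A. \<Sum>c\<in>C. \<Sum>b\<in>B. \<Sum>d\<in>D. \<Sum>j\<in>J. f j a c b d)"
    by (rule sum.cong[OF refl], rule sum.cong[OF refl], rule sum.cong[OF refl], rule sum.swap)
  finally show ?thesis .
qed

lemma delta2:
  assumes "finite B" "\<beta> \<in> B" "\<delta> \<in> B"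
  shows "(\<Sum>b\<in>B. \<Sum>d\<in>B. (of_bool (b = \<beta> \<and> d = \<delta>) :: complex) * f b * g d) = f \<beta> * g \<delta>"
proof -
  have "(\<Sum>b\<in>B. \<Sum>d\<in>B. (of_bool (b = \<beta> \<and> d = \<delta>) :: complex) * f b * g d) =
      (\<Sum>b\<in>B. if b = \<beta> then (\<Sum>d\<in>B. if d = \<delta> then f b * g d else 0) else 0)"
    by (auto intro!: sum.cong)
  also have "\<dots> = f \<beta> * g \<delta>" using assms by (simp add: sum.delta')
  finally show ?thesis .
qed

lemma bitstrings_empty: "bitstrings {} = {\<lambda>_. undefined}"
  by (simp add: bitstrings_def)

lemma purity_re:
  assumes al: "\<alpha> \<subseteq> {1..n}" and pure: "pure_state n \<psi>"
  shows "purity n \<psi> \<alpha> = Re (\<Sum>x\<in>bitstrings \<alpha>. \<Sum>y\<in>bitstrings \<alpha>. reduced n \<psi> \<alpha> x y * reduced n \<psi> \<alpha> y x)"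
proof (cases "\<alpha> = {}")
  case True
  have "reduced n \<psi> {} (\<lambda>_. undefined) (\<lambda>_. undefined) = (\<Sum>w\<in>bitstrings {1..n}. complex_of_real ((cmod (\<psi> w))^2))"
    unfolding reduced_def by (simp only: complex_norm_square merge_empty Diff_empty)
  also have "\<dots> = 1" using pure unfolding pure_state_def of_real_sum[symmetric] by simp
  finally show ?thesis using True by (simp add: purity_def bitstrings_empty)
next
  case False
  thus ?thesis by (simp add: purity_def)
qed

lemma merge_in_S: "\<alpha> \<subseteq> S \<Longrightarrow> c \<in> bitstrings S \<Longrightarrow> a \<in> bitstrings S \<Longrightarrow> merge \<alpha> c a \<in> bitstrings S"
  by (auto simp: bitstrings_iff merge_def)

lemma main_pointwise:
  assumes S: "S \<subseteq> {1..n}" and U: "\<And>i. i \<in> S \<Longrightarrow> U i \<in> U2" and pure: "pure_state n \<psi>"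
  shows "(\<Sum>J\<in>PiE S (\<lambda>_. {..<3}). \<Sum>z\<in>bitstrings S. (outcome_prob n S (\<lambda>i. Wm (J i) ** U i) \<psi> z)^2)
       = (\<Sum>\<alpha>\<in>Pow S. purity n \<psi> \<alpha>)"
proof -
  have finS: "finite S" using fin_sub[OF S] .
  let ?B = "bitstrings S"
  let ?J = "PiE S (\<lambda>_. {..<3::nat})"
  let ?r = "reduced n \<psi> S"
  let ?P = "\<lambda>\<alpha>. \<Sum>x\<in>bitstrings \<alpha>. \<Sum>y\<in>bitstrings \<alpha>. reduced n \<psi> \<alpha> x y * reduced n \<psi> \<alpha> y x"
  have "complex_of_real (\<Sum>J\<in>?J. \<Sum>z\<in>?B. (outcome_prob n S (\<lambda>i. Wm (J i) ** U i) \<psi> z)^2)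
     = (\<Sum>J\<in>?J. \<Sum>a\<in>?B. \<Sum>c\<in>?B. \<Sum>b\<in>?B. \<Sum>d\<in>?B. Gq S (\<lambda>i. Wm (J i) ** U i) a b c d * ?r a b * ?r c d)"
    unfolding of_real_sum[of _ ?J] sq_expand[OF S] ..
  also have "\<dots> = (\<Sum>a\<in>?B. \<Sum>c\<in>?B. \<Sum>b\<in>?B. \<Sum>d\<in>?B. \<Sum>J\<in>?J. Gq S (\<lambda>i. Wm (J i) ** U i) a b c d * ?r a b * ?r c d)"
    by (rule sum_pull_in4)
  also have "\<dots> = (\<Sum>a\<in>?B. \<Sum>c\<in>?B. \<Sum>b\<in>?B. \<Sum>d\<in>?B. \<Sum>\<alpha>\<in>Pow S. of_bool (b = merge \<alpha> c a \<and> d = merge \<alpha> a c) * ?r a b * ?r c d)"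
  proof (intro sum.cong refl)
    fix a c b d assume bits: "a \<in> ?B" "c \<in> ?B" "b \<in> ?B" "d \<in> ?B"
    have "(\<Sum>J\<in>?J. Gq S (\<lambda>i. Wm (J i) ** U i) a b c d * ?r a b * ?r c d)
       = (\<Sum>J\<in>?J. Gq S (\<lambda>i. Wm (J i) ** U i) a b c d) * ?r a b * ?r c d"
      by (simp add: sum_distrib_right)
    also have "\<dots> = (\<Prod>i\<in>S. of_bool (a i = d i \<and> c i = b i) + of_bool (a i = b i \<and> c i = d i)) * ?r a b * ?r c d"
      by (simp only: avg_Gq[OF finS U])
    also have "\<dots> = (\<Sum>\<alpha>\<in>Pow S. (\<Prod>i\<in>\<alpha>. of_bool (a i = d i \<and> c i = b i)) * (\<Prod>i\<in>S - \<alpha>. of_bool (a i = b i \<and> c i = d i))) * ?r a b * ?r c d"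
      by (simp only: prod_add[OF finS])
    also have "\<dots> = (\<Sum>\<alpha>\<in>Pow S. of_bool (b = merge \<alpha> c a \<and> d = merge \<alpha> a c)) * ?r a b * ?r c d"
      by (intro arg_cong2[where f = "(*)"] refl sum.cong) (use delta_prod[OF finS _ bits(1,3,2,4)] in auto)
    also have "\<dots> = (\<Sum>\<alpha>\<in>Pow S. of_bool (b = merge \<alpha> c a \<and> d = merge \<alpha> a c) * ?r a b * ?r c d)"
      by (simp add: sum_distrib_right)
    finally show "(\<Sum>J\<in>?J. Gq S (\<lambda>i. Wm (J i) ** U i) a b c d * ?r a b * ?r c d)
       = (\<Sum>\<alpha>\<in>Pow S. of_bool (b = merge \<alpha> c a \<and> d = merge \<alpha> a c) * ?r a b * ?r c d)" .
  qed
  also have "\<dots> = (\<Sum>\<alpha>\<in>Pow S. \<Sum>a\<in>?B. \<Sum>c\<in>?B. \<Sum>b\<in>?B. \<Sum>d\<in>?B. of_bool (b = merge \<alpha> c a \<and> d = merge \<alpha> a c) * ?r a b * ?r c d)"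
    by (rule sum_pull_in4[symmetric])
  also have "\<dots> = (\<Sum>\<alpha>\<in>Pow S. \<Sum>a\<in>?B. \<Sum>c\<in>?B. ?r a (merge \<alpha> c a) * ?r c (merge \<alpha> a c))"
    by (intro sum.cong refl delta2) (auto simp: finS merge_in_S)
  also have "\<dots> = (\<Sum>\<alpha>\<in>Pow S. ?P \<alpha>)"
    by (intro sum.cong refl purity_swap) (use S in auto)
  finally have eq: "complex_of_real (\<Sum>J\<in>?J. \<Sum>z\<in>?B. (outcome_prob n S (\<lambda>i. Wm (J i) ** U i) \<psi> z)^2) = (\<Sum>\<alpha>\<in>Pow S. ?P \<alpha>)" .
  have "(\<Sum>J\<in>?J. \<Sum>z\<in>?B. (outcome_prob n S (\<lambda>i. Wm (J i) ** U i) \<psi> z)^2) = Re (\<Sum>\<alpha>\<in>Pow S. ?P \<alpha>)"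
    using arg_cong[OF eq, of Re] by simp
  also have "\<dots> = (\<Sum>\<alpha>\<in>Pow S. purity n \<psi> \<alpha>)"
  proof -
    have "Re (\<Sum>\<alpha>\<in>Pow S. ?P \<alpha>) = (\<Sum>\<alpha>\<in>Pow S. Re (?P \<alpha>))" by (rule Re_sum)
    also have "\<dots> = (\<Sum>\<alpha>\<in>Pow S. purity n \<psi> \<alpha>)"
    proof (rule sum.cong[OF refl])
      fix \<alpha> assume "\<alpha> \<in> Pow S"
      hence "\<alpha> \<subseteq> {1..n}" using S by auto
      thus "Re (?P \<alpha>) = purity n \<psi> \<alpha>" using purity_re[OF _ pure] by simp
    qed
    finally show ?thesis .
  qed
  finally show ?thesis .
qed

lemma meas_entry:
  fixes a b :: 2 and \<mu> :: "mat2 measure"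
  assumes sets: "sets \<mu> = sets borel" and i: "i \<in> S"
  shows "(\<lambda>U. U i $ a $ b) \<in> borel_measurable (PiM S (\<lambda>_. \<mu>))"
proof -
  have 1: "(\<lambda>U. U i) \<in> PiM S (\<lambda>_. \<mu>) \<rightarrow>\<^sub>M (borel :: mat2 measure)"
    using measurable_component_singleton[OF i, of "\<lambda>_. \<mu>"] measurable_cong_sets[OF refl sets] by blast
  have 2: "(\<lambda>x::mat2. x $ a $ b) \<in> borel_measurable borel"
    by (intro borel_measurable_continuous_onI continuous_intros)
  show ?thesis using measurable_compose[OF 1 2] .
qed

lemma meas_apply_local:
  assumes sets: "sets \<mu> = sets borel"
  shows "(\<lambda>U. apply_local n S U \<psi> x) \<in> borel_measurable (PiM S (\<lambda>_. \<mu>))"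
  unfolding apply_local_def
  by (intro borel_measurable_sum borel_measurable_times borel_measurable_prod borel_measurable_const meas_entry[OF sets])

lemma meas_outcome_prob:
  assumes sets: "sets \<mu> = sets borel"
  shows "(\<lambda>U. outcome_prob n S U \<psi> z) \<in> borel_measurable (PiM S (\<lambda>_. \<mu>))"
  unfolding outcome_prob_def
proof (intro borel_measurable_sum)
  fix x
  show "(\<lambda>U. if restrict x S = z then (cmod (apply_local n S U \<psi> x))\<^sup>2 else 0) \<in> borel_measurable (PiM S (\<lambda>_. \<mu>))"
    using meas_apply_local[OF sets, of n S \<psi> x] by (cases "restrict x S = z") (simp_all, measurable)
qed

lemma Wm_U2: "Wm j \<in> U2"
proof -
  have "Hm \<in> U2"
    unfolding U2_def by (simp add: vec_eq_iff forall_2 matrix_matrix_mult_def sum_2' adjoint2_def Hm_def mat_def sq2_sq)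
  moreover have "Ym \<in> U2"
    unfolding U2_def by (simp add: vec_eq_iff forall_2 matrix_matrix_mult_def sum_2' adjoint2_def Ym_def mat_def sq2_sq algebra_simps)
  moreover have "mat 1 \<in> U2"
    unfolding U2_def adjoint2_def by (simp add: vec_eq_iff matrix_matrix_mult_def mat_def forall_2 sum_2')
  ultimately show ?thesis by (simp add: Wm_def)
qed

lemma distr_PiM_local:
  assumes fin: "finite I" and P: "prob_space \<mu>"
    and T: "\<And>i. i \<in> I \<Longrightarrow> T i \<in> \<mu> \<rightarrow>\<^sub>M \<mu>" and inv: "\<And>i. i \<in> I \<Longrightarrow> distr \<mu> \<mu> (T i) = \<mu>"
  shows "distr (PiM I (\<lambda>_. \<mu>)) (PiM I (\<lambda>_. \<mu>)) (\<lambda>x. \<lambda>i\<in>I. T i (x i)) = PiM I (\<lambda>_. \<mu>)"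
proof -
  interpret M: product_prob_space "\<lambda>_. \<mu>" by (rule product_prob_spaceI) (rule P)
  have meas: "(\<lambda>x. \<lambda>i\<in>I. T i (x i)) \<in> PiM I (\<lambda>_. \<mu>) \<rightarrow>\<^sub>M PiM I (\<lambda>_. \<mu>)"
  proof (rule measurable_restrict)
    fix i assume i: "i \<in> I"
    show "(\<lambda>x. T i (x i)) \<in> PiM I (\<lambda>_. \<mu>) \<rightarrow>\<^sub>M \<mu>"
      by (rule measurable_compose[OF measurable_component_singleton[OF i] T[OF i]])
  qed
  show ?thesis
  proof (rule M.PiM_eqI[OF fin])
    show "sets (distr (PiM I (\<lambda>_. \<mu>)) (PiM I (\<lambda>_. \<mu>)) (\<lambda>x. \<lambda>i\<in>I. T i (x i))) = sets (PiM I (\<lambda>_. \<mu>))"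
      by simp
    fix A assume A: "\<And>i. i \<in> I \<Longrightarrow> A i \<in> sets \<mu>"
    have "emeasure (distr (PiM I (\<lambda>_. \<mu>)) (PiM I (\<lambda>_. \<mu>)) (\<lambda>x. \<lambda>i\<in>I. T i (x i))) (PiE I A)
        = emeasure (PiM I (\<lambda>_. \<mu>)) ((\<lambda>x. \<lambda>i\<in>I. T i (x i)) -` PiE I A \<inter> space (PiM I (\<lambda>_. \<mu>)))"
      by (rule emeasure_distr[OF meas]) (simp add: sets_PiM_I_finite A fin)
    also have "(\<lambda>x. \<lambda>i\<in>I. T i (x i)) -` PiE I A \<inter> space (PiM I (\<lambda>_. \<mu>)) = PiE I (\<lambda>i. T i -` A i \<inter> space \<mu>)"
      by (auto simp: space_PiM PiE_def Pi_def extensional_def)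
    also have "emeasure (PiM I (\<lambda>_. \<mu>)) (PiE I (\<lambda>i. T i -` A i \<inter> space \<mu>)) = (\<Prod>i\<in>I. emeasure \<mu> (T i -` A i \<inter> space \<mu>))"
      by (rule M.emeasure_PiM[OF fin]) (rule measurable_sets[OF T A])
    also have "\<dots> = (\<Prod>i\<in>I. emeasure \<mu> (A i))"
    proof (rule prod.cong[OF refl])
      fix i assume i: "i \<in> I"
      have "emeasure \<mu> (A i) = emeasure (distr \<mu> \<mu> (T i)) (A i)" using inv[OF i] by simp
      also have "\<dots> = emeasure \<mu> (T i -` A i \<inter> space \<mu>)" by (rule emeasure_distr[OF T[OF i] A[OF i]])
      finally show "emeasure \<mu> (T i -` A i \<inter> space \<mu>) = emeasure \<mu> (A i)" by simp
    qed
    finally show "emeasure (distr (PiM I (\<lambda>_. \<mu>)) (PiM I (\<lambda>_. \<mu>)) (\<lambda>x. \<lambda>i\<in>I. T i (x i))) (PiE I A) = (\<Prod>i\<in>I. emeasure \<mu> (A i))" .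
  qed
qed

lemma apply_local_cong: "(\<And>i. i \<in> S \<Longrightarrow> U i = U' i) \<Longrightarrow> apply_local n S U \<psi> = apply_local n S U' \<psi>"
  unfolding apply_local_def by (intro ext sum.cong refl arg_cong2[where f = "(*)"] prod.cong) auto

lemma outcome_prob_cong:
  assumes "\<And>i. i \<in> S \<Longrightarrow> U i = U' i"
  shows "outcome_prob n S U \<psi> = outcome_prob n S U' \<psi>"
proof -
  have e: "apply_local n S U \<psi> = apply_local n S U' \<psi>" by (rule apply_local_cong) (rule assms)
  show ?thesis unfolding outcome_prob_def e ..
qed

lemma haar_facts:
  assumes "haar_U2 \<mu>"
  shows haar_prob: "prob_space \<mu>" and haar_sets: "sets \<mu> = sets borel"
    and haar_U2_sets: "U2 \<in> sets \<mu>" and haar_AE: "AE U in \<mu>. U \<in> U2"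
    and haar_meas: "\<And>W. (\<lambda>U. W ** U) \<in> \<mu> \<rightarrow>\<^sub>M \<mu>"
    and haar_inv: "\<And>W. W \<in> U2 \<Longrightarrow> distr \<mu> \<mu> (\<lambda>U. W ** U) = \<mu>"
proof -
  show P: "prob_space \<mu>" and sets: "sets \<mu> = sets borel" using assms by (auto simp: haar_U2_def)
  have e: "emeasure \<mu> U2 = 1" using assms by (auto simp: haar_U2_def)
  show U2s: "U2 \<in> sets \<mu>" using emeasure_notin_sets[of U2 \<mu>] e by auto
  show "AE U in \<mu>. U \<in> U2"
    by (rule prob_space.AE_prob_1[OF P]) (simp add: measure_def e)
  fix W :: mat2
  have c: "(\<lambda>U::mat2. W ** U) \<in> borel_measurable borel"
    unfolding matrix_matrix_mult_def by (intro borel_measurable_continuous_onI continuous_intros)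
  show m: "(\<lambda>U. W ** U) \<in> \<mu> \<rightarrow>\<^sub>M \<mu>"
    using c measurable_cong_sets[OF sets sets] by blast
  assume W: "W \<in> U2"
  have "distr \<mu> borel (\<lambda>U. W ** U) = \<mu>" using assms W by (auto simp: haar_U2_def)
  moreover have "distr \<mu> \<mu> (\<lambda>U. W ** U) = distr \<mu> borel (\<lambda>U. W ** U)"
    by (rule distr_cong) (simp_all add: sets)
  ultimately show "distr \<mu> \<mu> (\<lambda>U. W ** U) = \<mu>" by simp
qed

lemma AE_PiM_U2:
  assumes h: "haar_U2 \<mu>" and fin: "finite S"
  shows "AE U in PiM S (\<lambda>_. \<mu>). \<forall>i\<in>S. U i \<in> U2"
proof (rule AE_finite_allI[OF fin])
  fix i assume i: "i \<in> S"
  have P: "prob_space \<mu>" by (rule haar_prob[OF h])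
  have d: "distr (PiM S (\<lambda>_. \<mu>)) \<mu> (\<lambda>U. U i) = \<mu>"
    by (rule distr_PiM_component[OF P i])
  have "AE U in distr (PiM S (\<lambda>_. \<mu>)) \<mu> (\<lambda>U. U i). U \<in> U2" unfolding d by (rule haar_AE[OF h])
  thus "AE U in PiM S (\<lambda>_. \<mu>). U i \<in> U2"
    by (rule AE_distrD[OF measurable_component_singleton[OF i]])
qed

lemma meas_sq:
  assumes sets: "sets \<mu> = sets borel"
  shows "(\<lambda>U. \<Sum>z\<in>bitstrings S. (outcome_prob n S U \<psi> z)^2) \<in> borel_measurable (PiM S (\<lambda>_. \<mu>))"
  by (intro borel_measurable_sum borel_measurable_power meas_outcome_prob[OF sets])

lemma E_sq:
  assumes h: "haar_U2 \<mu>" and S: "S \<subseteq> {1..n}" and pure: "pure_state n \<psi>"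
  shows "(\<integral>\<^sup>+U. ennreal (\<Sum>z\<in>bitstrings S. (outcome_prob n S U \<psi> z)^2) \<partial>PiM S (\<lambda>_. \<mu>))
       = ennreal ((\<Sum>\<alpha>\<in>Pow S. purity n \<psi> \<alpha>) / 3 ^ card S)"
proof -
  let ?M = "PiM S (\<lambda>_. \<mu>)"
  let ?F = "\<lambda>U. \<Sum>z\<in>bitstrings S. (outcome_prob n S U \<psi> z)^2"
  let ?J = "PiE S (\<lambda>_. {..<3::nat})"
  let ?T = "\<lambda>J U. \<lambda>i\<in>S. Wm (J i) ** U i"
  define c where "c = (\<Sum>\<alpha>\<in>Pow S. purity n \<psi> \<alpha>)"
  have finS: "finite S" using fin_sub[OF S] .
  have P: "prob_space \<mu>" by (rule haar_prob[OF h])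
  have sets: "sets \<mu> = sets borel" by (rule haar_sets[OF h])
  have PM: "prob_space ?M" by (rule prob_space_PiM) (rule P)
  have Fm: "?F \<in> borel_measurable ?M" by (rule meas_sq[OF sets])
  have Tm: "?T J \<in> ?M \<rightarrow>\<^sub>M ?M" for J
  proof (rule measurable_restrict)
    fix i assume i: "i \<in> S"
    show "(\<lambda>x. Wm (J i) ** x i) \<in> ?M \<rightarrow>\<^sub>M \<mu>"
      by (rule measurable_compose[OF measurable_component_singleton[OF i] haar_meas[OF h]])
  qed
  have inv: "(\<integral>\<^sup>+U. ?F U \<partial>?M) = (\<integral>\<^sup>+U. ?F (?T J U) \<partial>?M)" for J
  proof -
    have d: "distr ?M ?M (?T J) = ?M"
      by (rule distr_PiM_local[OF finS P]) (simp_all add: haar_meas[OF h] haar_inv[OF h] Wm_U2)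
    have "(\<integral>\<^sup>+U. ?F U \<partial>?M) = (\<integral>\<^sup>+U. ?F U \<partial>distr ?M ?M (?T J))" by (simp only: d)
    also have "\<dots> = (\<integral>\<^sup>+U. ?F (?T J U) \<partial>?M)"
      by (rule nn_integral_distr[OF Tm]) (simp only: d measurable_compose[OF Fm measurable_ennreal])
    finally show ?thesis .
  qed
  have pw: "(\<Sum>J\<in>?J. ?F (?T J U)) = c" if U: "\<forall>i\<in>S. U i \<in> U2" for U
  proof -
    have "(\<Sum>J\<in>?J. ?F (?T J U)) = (\<Sum>J\<in>?J. ?F (\<lambda>i. Wm (J i) ** U i))"
      by (intro sum.cong refl, subst outcome_prob_cong[where U' = "\<lambda>i. Wm (_ i) ** U i"]) auto
    also have "\<dots> = c" unfolding c_def by (rule main_pointwise[OF S _ pure]) (use U in auto)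
    finally show ?thesis .
  qed
  have c0: "c \<ge> 0"
  proof -
    have "(\<Sum>J\<in>?J. ?F (?T J (\<lambda>_. mat 1))) = c" by (rule pw) (simp add: Wm_U2[of 0, unfolded Wm_def, simplified])
    moreover have "(\<Sum>J\<in>?J. ?F (?T J (\<lambda>_. mat 1))) \<ge> 0" by (intro sum_nonneg) auto
    ultimately show ?thesis by simp
  qed
  have "ennreal (of_nat (card ?J)) * (\<integral>\<^sup>+U. ?F U \<partial>?M) = (\<Sum>J\<in>?J. \<integral>\<^sup>+U. ?F U \<partial>?M)"
    by (simp add: ennreal_of_nat_eq_real_of_nat)
  also have "\<dots> = (\<Sum>J\<in>?J. \<integral>\<^sup>+U. ?F (?T J U) \<partial>?M)"
    by (intro sum.cong refl inv)
  also have "\<dots> = (\<integral>\<^sup>+U. (\<Sum>J\<in>?J. ennreal (?F (?T J U))) \<partial>?M)"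
    by (rule nn_integral_sum[symmetric]) (intro measurable_compose[OF measurable_compose[OF Tm Fm] measurable_ennreal])
  also have "\<dots> = (\<integral>\<^sup>+U. ennreal (\<Sum>J\<in>?J. ?F (?T J U)) \<partial>?M)"
    by (intro nn_integral_cong sum_ennreal) (auto intro!: sum_nonneg)
  also have "\<dots> = (\<integral>\<^sup>+U. ennreal c \<partial>?M)"
    by (rule nn_integral_cong_AE) (use AE_PiM_U2[OF h finS] pw in auto)
  also have "\<dots> = ennreal c"
    using prob_space.emeasure_space_1[OF PM] by simp
  finally have eq: "ennreal (of_nat (card ?J)) * (\<integral>\<^sup>+U. ?F U \<partial>?M) = ennreal c" .
  have cardJ: "card ?J = 3 ^ card S" using finS by (simp add: card_PiE)
  have "ennreal (of_nat (card ?J)) * ennreal (c / 3 ^ card S) = ennreal c"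
    using c0 by (simp add: cardJ ennreal_mult[symmetric])
  hence "ennreal (of_nat (card ?J)) * (\<integral>\<^sup>+U. ?F U \<partial>?M) = ennreal (of_nat (card ?J)) * ennreal (c / 3 ^ card S)"
    using eq by simp
  thus ?thesis unfolding c_def[symmetric] ennreal_mult_cancel_left by (simp add: cardJ)
qed

lemma prod_two_if:
  assumes "finite I" "k \<in> I" "k' \<in> I" "k \<noteq> k'"
  shows "(\<Prod>m\<in>I. if m = k \<or> m = k' then f m else (1::'a::comm_monoid_mult)) = f k * f k'"
proof -
  have "(\<Prod>m\<in>I. if m = k \<or> m = k' then f m else 1) = prod f (I \<inter> {m. m = k \<or> m = k'}) * prod (\<lambda>_. 1) (I \<inter> - {m. m = k \<or> m = k'})"
    by (rule prod.If_cases) (rule assms(1))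
  also have "I \<inter> {m. m = k \<or> m = k'} = {k, k'}" using assms by auto
  finally show ?thesis using assms by simp
qed

lemma sum_pair_eq:
  fixes p :: "'b \<Rightarrow> real"
  assumes I: "finite I" and B: "finite B" and k: "k \<in> I" "k' \<in> I" "k \<noteq> k'" and p1: "(\<Sum>z\<in>B. p z) = 1"
  shows "(\<Sum>Z\<in>PiE I (\<lambda>_. B). (\<Prod>m\<in>I. p (Z m)) * of_bool (Z k = Z k')) = (\<Sum>z\<in>B. p z ^ 2)"
proof -
  let ?h = "\<lambda>z m y. p y * (if m = k \<or> m = k' then of_bool (y = z) else 1)"
  have "(\<Sum>Z\<in>PiE I (\<lambda>_. B). (\<Prod>m\<in>I. p (Z m)) * of_bool (Z k = Z k'))
      = (\<Sum>Z\<in>PiE I (\<lambda>_. B). \<Sum>z\<in>B. \<Prod>m\<in>I. ?h z m (Z m))"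
  proof (rule sum.cong[OF refl])
    fix Z assume Z: "Z \<in> PiE I (\<lambda>_. B)"
    have ZkB: "Z k \<in> B" using Z k by auto
    have "of_bool (Z k = Z k') = (\<Sum>z\<in>B. (of_bool (Z k = z) * of_bool (Z k' = z) :: real))"
      using ZkB B by (auto simp: of_bool_def if_distrib[where f = "\<lambda>x. x * _"] sum.delta cong: if_cong)
    hence "(\<Prod>m\<in>I. p (Z m)) * of_bool (Z k = Z k') = (\<Sum>z\<in>B. (\<Prod>m\<in>I. p (Z m)) * (of_bool (Z k = z) * of_bool (Z k' = z)))"
      by (simp add: sum_distrib_left)
    also have "\<dots> = (\<Sum>z\<in>B. \<Prod>m\<in>I. ?h z m (Z m))"
    proof (rule sum.cong[OF refl])
      fix z assume "z \<in> B"
      have "(\<Prod>m\<in>I. ?h z m (Z m)) = (\<Prod>m\<in>I. p (Z m)) * (\<Prod>m\<in>I. if m = k \<or> m = k' then of_bool (Z m = z) else 1)"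
        by (simp add: prod.distrib)
      also have "(\<Prod>m\<in>I. if m = k \<or> m = k' then of_bool (Z m = z) else (1::real)) = of_bool (Z k = z) * of_bool (Z k' = z)"
        by (rule prod_two_if[OF I k])
      finally show "(\<Prod>m\<in>I. p (Z m)) * (of_bool (Z k = z) * of_bool (Z k' = z)) = (\<Prod>m\<in>I. ?h z m (Z m))" by simp
    qed
    finally show "(\<Prod>m\<in>I. p (Z m)) * of_bool (Z k = Z k') = (\<Sum>z\<in>B. \<Prod>m\<in>I. ?h z m (Z m))" .
  qed
  also have "\<dots> = (\<Sum>z\<in>B. \<Sum>Z\<in>PiE I (\<lambda>_. B). \<Prod>m\<in>I. ?h z m (Z m))" by (rule sum.swap)
  also have "\<dots> = (\<Sum>z\<in>B. \<Prod>m\<in>I. \<Sum>y\<in>B. ?h z m y)"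
    by (intro sum.cong refl prod_sum_PiE[symmetric]) (use I B in auto)
  also have "\<dots> = (\<Sum>z\<in>B. \<Prod>m\<in>I. if m = k \<or> m = k' then p z else 1)"
  proof (intro sum.cong refl prod.cong)
    fix z m assume z: "z \<in> B"
    show "(\<Sum>y\<in>B. ?h z m y) = (if m = k \<or> m = k' then p z else 1)"
      using z B p1 by (auto simp: of_bool_def if_distrib[where f = "\<lambda>x. _ * x"] sum.delta' cong: if_cong)
  qed
  also have "\<dots> = (\<Sum>z\<in>B. p z ^ 2)"
    by (intro sum.cong refl) (simp add: prod_two_if[OF I k] power2_eq_square)
  finally show ?thesis .
qed

lemma S_hat_sum:
  fixes p :: "bits \<Rightarrow> real"
  assumes K: "K \<ge> 2" and B: "finite B" and p1: "(\<Sum>z\<in>B. p z) = 1"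
  shows "(\<Sum>Z\<in>PiE {1..K} (\<lambda>_. B). (\<Prod>m\<in>{1..K}. p (Z m)) * S_hat K Z) = (\<Sum>z\<in>B. p z ^ 2)"
proof -
  let ?Z = "PiE {1..K} (\<lambda>_. B)"
  let ?Q = "(\<Sum>z\<in>B. p z ^ 2)"
  let ?c = "1 / (real K * (real K - 1))"
  have "(\<Sum>Z\<in>?Z. (\<Prod>m\<in>{1..K}. p (Z m)) * S_hat K Z)
      = ?c * (\<Sum>Z\<in>?Z. \<Sum>k\<in>{1..K}. \<Sum>k'\<in>{1..K} - {k}. (\<Prod>m\<in>{1..K}. p (Z m)) * of_bool (Z k = Z k'))"
    unfolding S_hat_def by (simp add: sum_distrib_left mult_ac)
  also have "(\<Sum>Z\<in>?Z. \<Sum>k\<in>{1..K}. \<Sum>k'\<in>{1..K} - {k}. (\<Prod>m\<in>{1..K}. p (Z m)) * of_bool (Z k = Z k'))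
      = (\<Sum>k\<in>{1..K}. \<Sum>Z\<in>?Z. \<Sum>k'\<in>{1..K} - {k}. (\<Prod>m\<in>{1..K}. p (Z m)) * of_bool (Z k = Z k'))"
    by (rule sum.swap)
  also have "\<dots> = (\<Sum>k\<in>{1..K}. \<Sum>k'\<in>{1..K} - {k}. \<Sum>Z\<in>?Z. (\<Prod>m\<in>{1..K}. p (Z m)) * of_bool (Z k = Z k'))"
    by (rule sum.cong[OF refl], rule sum.swap)
  also have "\<dots> = (\<Sum>k\<in>{1..K}. \<Sum>k'\<in>{1..K} - {k}. ?Q)"
    by (intro sum.cong refl sum_pair_eq) (use B p1 in auto)
  also have "\<dots> = (\<Sum>k\<in>{1..K}. (real K - 1) * ?Q)"
  proof (rule sum.cong[OF refl])
    fix k assume k: "k \<in> {1..K}"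
    have "card ({1..K} - {k}) = K - 1" using k by simp
    moreover have "real (K - 1) = real K - 1" using K by (simp add: of_nat_diff)
    ultimately show "(\<Sum>k'\<in>{1..K} - {k}. ?Q) = (real K - 1) * ?Q" by simp
  qed
  also have "\<dots> = real K * (real K - 1) * ?Q" by simp
  finally have "(\<Sum>Z\<in>?Z. (\<Prod>m\<in>{1..K}. p (Z m)) * S_hat K Z) = ?c * (real K * (real K - 1) * ?Q)" .
  moreover have "real K * (real K - 1) \<noteq> 0" using K by simp
  ultimately show ?thesis by simp
qed

lemma meas_pair_count:
  assumes fin: "finite BZ" and g: "\<And>Z. Z \<in> BZ \<Longrightarrow> (\<lambda>U. g (U, Z)) \<in> M \<rightarrow>\<^sub>M N"
  shows "g \<in> (M \<Otimes>\<^sub>M count_space BZ) \<rightarrow>\<^sub>M N"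
proof -
  have "(\<lambda>(x,y). g (y,x)) \<in> (count_space BZ \<Otimes>\<^sub>M M) \<rightarrow>\<^sub>M N"
    by (rule measurable_pair_measure_countable1) (auto simp: countable_finite fin g)
  thus ?thesis by (subst measurable_pair_swap_iff) simp
qed

definition BZ :: "nat set \<Rightarrow> nat \<Rightarrow> (nat \<Rightarrow> bits) set" where
  "BZ S K = PiE {1..K} (\<lambda>_. bitstrings S)"

definition Dens :: "nat \<Rightarrow> nat set \<Rightarrow> nat \<Rightarrow> qstate \<Rightarrow> (nat \<Rightarrow> mat2) \<Rightarrow> (nat \<Rightarrow> bits) \<Rightarrow> real" where
  "Dens n S K \<psi> U Z = (\<Prod>k\<in>{1..K}. outcome_prob n S U \<psi> (Z k))"

lemma finite_BZ: "finite S \<Longrightarrow> finite (BZ S K)"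
  by (simp add: BZ_def finite_PiE)

lemma round_def': "round_measure n S K \<mu> \<psi> =
   density (PiM S (\<lambda>_. \<mu>) \<Otimes>\<^sub>M count_space (BZ S K)) (\<lambda>x. ennreal (Dens n S K \<psi> (fst x) (snd x)))"
  unfolding round_measure_def BZ_def Dens_def by (simp add: case_prod_unfold)

lemma Dens_nonneg: "Dens n S K \<psi> U Z \<ge> 0"
  unfolding Dens_def outcome_prob_def by (intro prod_nonneg sum_nonneg) auto

lemma meas_Dens:
  assumes sets: "sets \<mu> = sets borel" and finS: "finite S"
  shows "(\<lambda>x. ennreal (Dens n S K \<psi> (fst x) (snd x))) \<in> borel_measurable (PiM S (\<lambda>_. \<mu>) \<Otimes>\<^sub>M count_space (BZ S K))"
proof (rule meas_pair_count[OF finite_BZ[OF finS]])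
  fix Z
  show "(\<lambda>U. ennreal (Dens n S K \<psi> (fst (U, Z)) (snd (U, Z)))) \<in> borel_measurable (PiM S (\<lambda>_. \<mu>))"
    unfolding Dens_def fst_conv snd_conv
    by (intro measurable_compose[OF _ measurable_ennreal] borel_measurable_prod meas_outcome_prob[OF sets])
qed

lemma round_nn_integral:
  assumes sets: "sets \<mu> = sets borel" and finS: "finite S"
    and g: "g \<in> borel_measurable (PiM S (\<lambda>_. \<mu>) \<Otimes>\<^sub>M count_space (BZ S K))"
  shows "(\<integral>\<^sup>+x. g x \<partial>round_measure n S K \<mu> \<psi>) =
     (\<integral>\<^sup>+U. (\<Sum>Z\<in>BZ S K. ennreal (Dens n S K \<psi> U Z) * g (U, Z)) \<partial>PiM S (\<lambda>_. \<mu>))"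
proof -
  interpret C: sigma_finite_measure "count_space (BZ S K)"
    by (rule sigma_finite_measure_count_space_finite[OF finite_BZ[OF finS]])
  have "(\<integral>\<^sup>+x. g x \<partial>round_measure n S K \<mu> \<psi>) =
      (\<integral>\<^sup>+x. ennreal (Dens n S K \<psi> (fst x) (snd x)) * g x \<partial>(PiM S (\<lambda>_. \<mu>) \<Otimes>\<^sub>M count_space (BZ S K)))"
    unfolding round_def' by (rule nn_integral_density[OF meas_Dens[OF sets finS] g])
  also have "\<dots> = (\<integral>\<^sup>+U. \<integral>\<^sup>+Z. ennreal (Dens n S K \<psi> U Z) * g (U, Z) \<partial>count_space (BZ S K) \<partial>PiM S (\<lambda>_. \<mu>))"
    by (rule C.nn_integral_fst[symmetric, where f = "\<lambda>x. ennreal (Dens n S K \<psi> (fst x) (snd x)) * g x", simplified])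
       (intro borel_measurable_times_ennreal meas_Dens[OF sets finS] g)
  also have "\<dots> = (\<integral>\<^sup>+U. (\<Sum>Z\<in>BZ S K. ennreal (Dens n S K \<psi> U Z) * g (U, Z)) \<partial>PiM S (\<lambda>_. \<mu>))"
    by (intro nn_integral_cong nn_integral_count_space_finite finite_BZ[OF finS])
  finally show ?thesis .
qed

lemma sum_Dens:
  assumes S: "S \<subseteq> {1..n}" and U: "\<forall>i\<in>S. U i \<in> U2" and pure: "pure_state n \<psi>"
  shows "(\<Sum>Z\<in>BZ S K. Dens n S K \<psi> U Z) = 1"
proof -
  have finS: "finite S" using fin_sub[OF S] .
  have "(\<Sum>Z\<in>BZ S K. Dens n S K \<psi> U Z) = (\<Prod>k\<in>{1..K}. \<Sum>z\<in>bitstrings S. outcome_prob n S U \<psi> z)"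
    unfolding BZ_def Dens_def by (rule prod_sum_PiE[symmetric]) (use finS in auto)
  also have "\<dots> = 1" using sum_outcome_prob[OF S _ pure] U by simp
  finally show ?thesis .
qed

lemma round_prob:
  assumes h: "haar_U2 \<mu>" and S: "S \<subseteq> {1..n}" and pure: "pure_state n \<psi>"
  shows "prob_space (round_measure n S K \<mu> \<psi>)"
proof
  have finS: "finite S" using fin_sub[OF S] .
  have sets: "sets \<mu> = sets borel" by (rule haar_sets[OF h])
  have PM: "prob_space (PiM S (\<lambda>_. \<mu>))" by (rule prob_space_PiM) (rule haar_prob[OF h])
  have "emeasure (round_measure n S K \<mu> \<psi>) (space (round_measure n S K \<mu> \<psi>)) = (\<integral>\<^sup>+x. 1 \<partial>round_measure n S K \<mu> \<psi>)"
    by simp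
  also have "\<dots> = (\<integral>\<^sup>+U. (\<Sum>Z\<in>BZ S K. ennreal (Dens n S K \<psi> U Z) * 1) \<partial>PiM S (\<lambda>_. \<mu>))"
    by (rule round_nn_integral[OF sets finS]) simp
  also have "\<dots> = (\<integral>\<^sup>+U. 1 \<partial>PiM S (\<lambda>_. \<mu>))"
  proof (rule nn_integral_cong_AE)
    show "AE U in PiM S (\<lambda>_. \<mu>). (\<Sum>Z\<in>BZ S K. ennreal (Dens n S K \<psi> U Z) * 1) = 1"
      using AE_PiM_U2[OF h finS]
    proof (rule AE_mp, intro AE_I2 impI)
      fix U assume U: "\<forall>i\<in>S. U i \<in> U2"
      have "(\<Sum>Z\<in>BZ S K. ennreal (Dens n S K \<psi> U Z) * 1) = ennreal (\<Sum>Z\<in>BZ S K. Dens n S K \<psi> U Z)"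
        by (simp add: Dens_nonneg)
      thus "(\<Sum>Z\<in>BZ S K. ennreal (Dens n S K \<psi> U Z) * 1) = 1" using sum_Dens[OF S U pure] by simp
    qed
  qed
  also have "\<dots> = 1" using prob_space.emeasure_space_1[OF PM] by simp
  finally show "emeasure (round_measure n S K \<mu> \<psi>) (space (round_measure n S K \<mu> \<psi>)) = 1" .
qed

lemma S_hat_nonneg: "S_hat K Z \<ge> 0"
proof -
  have "real K * (real K - 1) \<ge> 0"
    by (cases "K = 0") (auto intro!: mult_nonneg_nonneg)
  thus ?thesis unfolding S_hat_def by (intro mult_nonneg_nonneg sum_nonneg) auto
qed

lemma S_hat_le1:
  assumes K: "K \<ge> 2"
  shows "S_hat K Z \<le> 1"
proof -
  have "(\<Sum>k\<in>{1..K}. \<Sum>k'\<in>{1..K} - {k}. (of_bool (Z k = Z k') :: real)) \<le> (\<Sum>k\<in>{1..K}. \<Sum>k'\<in>{1..K} - {k}. 1)"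
    by (intro sum_mono) auto
  also have "\<dots> = (\<Sum>k\<in>{1..K}. real K - 1)"
  proof (rule sum.cong[OF refl])
    fix k assume k: "k \<in> {1..K}"
    have "card ({1..K} - {k}) = K - 1" using k by simp
    moreover have "real (K - 1) = real K - 1" using K by (simp add: of_nat_diff)
    ultimately show "(\<Sum>k'\<in>{1..K} - {k}. (1::real)) = real K - 1" by simp
  qed
  also have "\<dots> = real K * (real K - 1)" by simp
  finally have le: "(\<Sum>k\<in>{1..K}. \<Sum>k'\<in>{1..K} - {k}. (of_bool (Z k = Z k') :: real)) \<le> real K * (real K - 1)" .
  have pos: "real K * (real K - 1) > 0" using K by simp
  show ?thesis unfolding S_hat_def using le pos by (simp add: divide_le_eq_1)
qed

lemma purity_sum_nonneg:
  assumes S: "S \<subseteq> {1..n}" and pure: "pure_state n \<psi>"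
  shows "(\<Sum>\<alpha>\<in>Pow S. purity n \<psi> \<alpha>) \<ge> 0"
proof -
  have "mat 1 \<in> U2" using Wm_U2[of 0] by (simp add: Wm_def)
  hence "(\<Sum>J\<in>PiE S (\<lambda>_. {..<3}). \<Sum>z\<in>bitstrings S. (outcome_prob n S (\<lambda>i. Wm (J i) ** (\<lambda>_. mat 1) i) \<psi> z)^2)
       = (\<Sum>\<alpha>\<in>Pow S. purity n \<psi> \<alpha>)"
    by (intro main_pointwise[OF S _ pure])
  moreover have "(\<Sum>J\<in>PiE S (\<lambda>_. {..<3}). \<Sum>z\<in>bitstrings S. (outcome_prob n S (\<lambda>i. Wm (J i) ** (\<lambda>_. mat 1) i) \<psi> z)^2) \<ge> 0"
    by (intro sum_nonneg) auto
  ultimately show ?thesis by simp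
qed

lemma meas_Shat_round:
  "(\<lambda>x. S_hat K (snd x)) \<in> borel_measurable (round_measure n S K \<mu> \<psi>)"
proof -
  have "(\<lambda>x. S_hat K (snd x)) \<in> borel_measurable (PiM S (\<lambda>_. \<mu>) \<Otimes>\<^sub>M count_space (BZ S K))"
    by (rule measurable_compose[OF measurable_snd]) simp
  thus ?thesis unfolding round_def' by simp
qed

lemma round_E_Shat:
  assumes h: "haar_U2 \<mu>" and S: "S \<subseteq> {1..n}" and pure: "pure_state n \<psi>" and K: "K \<ge> 2"
  shows "(\<integral>x. S_hat K (snd x) \<partial>round_measure n S K \<mu> \<psi>) = (\<Sum>\<alpha>\<in>Pow S. purity n \<psi> \<alpha>) / 3 ^ card S"
proof -
  have finS: "finite S" using fin_sub[OF S] .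
  have sets: "sets \<mu> = sets borel" by (rule haar_sets[OF h])
  have gm: "(\<lambda>x. ennreal (S_hat K (snd x))) \<in> borel_measurable (PiM S (\<lambda>_. \<mu>) \<Otimes>\<^sub>M count_space (BZ S K))"
    by (rule measurable_compose[OF measurable_snd]) simp
  have "(\<integral>\<^sup>+x. ennreal (S_hat K (snd x)) \<partial>round_measure n S K \<mu> \<psi>) =
     (\<integral>\<^sup>+U. (\<Sum>Z\<in>BZ S K. ennreal (Dens n S K \<psi> U Z) * ennreal (S_hat K (snd (U, Z)))) \<partial>PiM S (\<lambda>_. \<mu>))"
    by (rule round_nn_integral[OF sets finS gm])
  also have "\<dots> = (\<integral>\<^sup>+U. ennreal (\<Sum>z\<in>bitstrings S. (outcome_prob n S U \<psi> z)^2) \<partial>PiM S (\<lambda>_. \<mu>))"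
  proof (rule nn_integral_cong_AE)
    show "AE U in PiM S (\<lambda>_. \<mu>). (\<Sum>Z\<in>BZ S K. ennreal (Dens n S K \<psi> U Z) * ennreal (S_hat K (snd (U, Z))))
        = ennreal (\<Sum>z\<in>bitstrings S. (outcome_prob n S U \<psi> z)^2)"
      using AE_PiM_U2[OF h finS]
    proof (rule AE_mp, intro AE_I2 impI)
      fix U assume U: "\<forall>i\<in>S. U i \<in> U2"
      have "(\<Sum>Z\<in>BZ S K. ennreal (Dens n S K \<psi> U Z) * ennreal (S_hat K (snd (U, Z))))
          = ennreal (\<Sum>Z\<in>BZ S K. Dens n S K \<psi> U Z * S_hat K Z)"
        by (simp add: Dens_nonneg S_hat_nonneg ennreal_mult[symmetric])
      also have "(\<Sum>Z\<in>BZ S K. Dens n S K \<psi> U Z * S_hat K Z) = (\<Sum>z\<in>bitstrings S. (outcome_prob n S U \<psi> z)^2)"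
        unfolding BZ_def Dens_def
        by (rule S_hat_sum[OF K]) (use finS sum_outcome_prob[OF S _ pure] U in auto)
      finally show "(\<Sum>Z\<in>BZ S K. ennreal (Dens n S K \<psi> U Z) * ennreal (S_hat K (snd (U, Z))))
        = ennreal (\<Sum>z\<in>bitstrings S. (outcome_prob n S U \<psi> z)^2)" .
    qed
  qed
  also have "\<dots> = ennreal ((\<Sum>\<alpha>\<in>Pow S. purity n \<psi> \<alpha>) / 3 ^ card S)"
    by (rule E_sq[OF h S pure])
  finally have nn: "(\<integral>\<^sup>+x. ennreal (S_hat K (snd x)) \<partial>round_measure n S K \<mu> \<psi>) = ennreal ((\<Sum>\<alpha>\<in>Pow S. purity n \<psi> \<alpha>) / 3 ^ card S)" .
  have "(\<integral>x. S_hat K (snd x) \<partial>round_measure n S K \<mu> \<psi>) = enn2real (\<integral>\<^sup>+x. ennreal (S_hat K (snd x)) \<partial>round_measure n S K \<mu> \<psi>)"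
    by (rule integral_eq_nn_integral[OF meas_Shat_round]) (simp add: S_hat_nonneg)
  also have "\<dots> = (\<Sum>\<alpha>\<in>Pow S. purity n \<psi> \<alpha>) / 3 ^ card S"
    unfolding nn using purity_sum_nonneg[OF S pure] by simp
  finally show ?thesis .
qed

lemma part1:
  assumes h: "haar_U2 \<mu>" and S: "S \<subseteq> {1..n}" and pure: "pure_state n \<psi>" and K: "K \<ge> 2" and L: "L \<ge> 1"
  shows "integrable (exp_measure n S K L \<mu> \<psi>) (C_hat S K L) \<and>
         (\<integral>\<omega>. C_hat S K L \<omega> \<partial>exp_measure n S K L \<mu> \<psi>) = conc_ent n \<psi> S"
    and "\<And>l. l \<in> {1..L} \<Longrightarrow> (\<integral>\<omega>. S_hat K (snd (\<omega> l)) \<partial>exp_measure n S K L \<mu> \<psi>) = (\<Sum>\<alpha>\<in>Pow S. purity n \<psi> \<alpha>) / 3 ^ card S"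
proof -
  let ?R = "round_measure n S K \<mu> \<psi>"
  let ?E = "exp_measure n S K L \<mu> \<psi>"
  let ?X = "\<lambda>l \<omega>. S_hat K (snd (\<omega> l))"
  define e where "e = (\<Sum>\<alpha>\<in>Pow S. purity n \<psi> \<alpha>) / 3 ^ card S"
  have R: "prob_space ?R" by (rule round_prob[OF h S pure])
  have E: "prob_space ?E" unfolding exp_measure_def by (rule prob_space_PiM) (rule R)
  have Xm: "?X l \<in> borel_measurable ?E" if "l \<in> {1..L}" for l
    unfolding exp_measure_def
    by (rule measurable_compose[OF measurable_component_singleton[OF that] meas_Shat_round])
  have Xint: "integrable ?E (?X l)" if "l \<in> {1..L}" for l
    by (rule finite_measure.integrable_const_bound[where B = 1])
       (use E Xm[OF that] S_hat_le1[OF K] S_hat_nonneg in \<open>auto simp: prob_space_def\<close>)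
  have EX: "(\<integral>\<omega>. ?X l \<omega> \<partial>?E) = e" if "l \<in> {1..L}" for l
  proof -
    have d: "distr ?E ?R (\<lambda>\<omega>. \<omega> l) = ?R"
      unfolding exp_measure_def by (rule distr_PiM_component[OF R that])
    have "(\<integral>\<omega>. ?X l \<omega> \<partial>?E) = (\<integral>x. S_hat K (snd x) \<partial>distr ?E ?R (\<lambda>\<omega>. \<omega> l))"
      unfolding exp_measure_def
      by (rule integral_distr[symmetric, OF measurable_component_singleton[OF that] meas_Shat_round])
    also have "\<dots> = e" unfolding d e_def by (rule round_E_Shat[OF h S pure K])
    finally show ?thesis .
  qed
  show "(\<integral>\<omega>. S_hat K (snd (\<omega> l)) \<partial>exp_measure n S K L \<mu> \<psi>) = (\<Sum>\<alpha>\<in>Pow S. purity n \<psi> \<alpha>) / 3 ^ card S"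
    if "l \<in> {1..L}" for l using EX[OF that] unfolding e_def .
  have Cdef: "C_hat S K L = (\<lambda>\<omega>. 1 - (3/2) ^ card S * (1 / real L) * (\<Sum>l\<in>{1..L}. ?X l \<omega>))"
    by (simp add: C_hat_def fun_eq_iff)
  have sint: "integrable ?E (\<lambda>\<omega>. \<Sum>l\<in>{1..L}. ?X l \<omega>)"
  proof -
    have "\<And>l. l \<in> {1..L} \<Longrightarrow> integrable ?E (?X l)" by (rule Xint)
    from Bochner_Integration.integrable_sum[OF this] show ?thesis .
  qed
  have fm: "finite_measure ?E" using E by (simp add: prob_space_def)
  have c1: "integrable ?E (\<lambda>_. 1::real)" by (rule finite_measure.integrable_const[OF fm])
  have m1: "measure ?E (space ?E) = 1" by (rule prob_space.prob_space[OF E])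
  have sint2: "integrable ?E (\<lambda>\<omega>. (3/2) ^ card S * (1 / real L) * (\<Sum>l\<in>{1..L}. ?X l \<omega>))"
    by (rule integrable_mult_right) (rule sint)
  show "integrable ?E (C_hat S K L) \<and> (\<integral>\<omega>. C_hat S K L \<omega> \<partial>?E) = conc_ent n \<psi> S"
  proof
    show "integrable ?E (C_hat S K L)"
      unfolding Cdef by (rule Bochner_Integration.integrable_diff[OF c1 sint2])
    have "(\<integral>\<omega>. C_hat S K L \<omega> \<partial>?E) = (\<integral>\<omega>. 1 \<partial>?E) - (\<integral>\<omega>. (3/2) ^ card S * (1 / real L) * (\<Sum>l\<in>{1..L}. ?X l \<omega>) \<partial>?E)"
      unfolding Cdef by (rule Bochner_Integration.integral_diff[OF c1 sint2])
    also have "\<dots> = 1 - (3/2) ^ card S * (1 / real L) * (\<Sum>l\<in>{1..L}. \<integral>\<omega>. ?X l \<omega> \<partial>?E)"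
      using m1 Bochner_Integration.integral_sum[where I = "{1..L}", OF Xint] sint by simp
    also have "\<dots> = 1 - (3/2) ^ card S * (1 / real L) * (real L * e)"
      by (simp add: EX)
    also have "\<dots> = conc_ent n \<psi> S"
      using L by (simp add: e_def conc_ent_def power_divide)
    finally show "(\<integral>\<omega>. C_hat S K L \<omega> \<partial>?E) = conc_ent n \<psi> S" .
  qed
qed

lemma part2:
  assumes h: "haar_U2 mu" and S: "S \<subseteq> {1..n}" and pure: "pure_state n \<psi>" and K: "K \<ge> 2" and L: "L \<ge> 1"
    and eps: "\<epsilon> > 0" and d0: "0 < \<delta>" and d1: "\<delta> < 1"
    and Lbig: "real L \<ge> (1/2) * (9/4) ^ card S * ln (2 / \<delta>) / \<epsilon>^2"
  shows "measure (exp_measure n S K L mu \<psi>)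
           {\<omega> \<in> space (exp_measure n S K L mu \<psi>). \<bar>C_hat S K L \<omega> - conc_ent n \<psi> S\<bar> \<ge> \<epsilon>} \<le> \<delta>"
proof -
  let ?R = "round_measure n S K mu \<psi>"
  let ?E = "exp_measure n S K L mu \<psi>"
  let ?X = "\<lambda>l \<omega>. S_hat K (snd (\<omega> l))"
  define e where "e = (\<Sum>\<alpha>\<in>Pow S. purity n \<psi> \<alpha>) / 3 ^ card S"
  define k :: real where "k = (3/2) ^ card S"
  have R: "prob_space ?R" by (rule round_prob[OF h S pure])
  have E: "prob_space ?E" unfolding exp_measure_def by (rule prob_space_PiM) (rule R)
  have comp_m: "(\<lambda>\<omega>. \<omega> l) \<in> ?E \<rightarrow>\<^sub>M ?R" if "l \<in> {1..L}" for l
    unfolding exp_measure_def by (rule measurable_component_singleton[OF that])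
  have Ym: "(\<lambda>x. S_hat K (snd x)) \<in> ?R \<rightarrow>\<^sub>M borel" by (rule meas_Shat_round)
  have indc: "prob_space.indep_vars ?E (\<lambda>_. ?R) (\<lambda>l \<omega>. \<omega> l) {1..L}"
  proof (subst prob_space.indep_vars_iff_distr_eq_PiM'[OF E])
    show "{1..L} \<noteq> {}" using L by simp
    show "\<And>i. i \<in> {1..L} \<Longrightarrow> (\<lambda>\<omega>. \<omega> i) \<in> ?E \<rightarrow>\<^sub>M ?R" by (rule comp_m)
    have "distr ?E (PiM {1..L} (\<lambda>_. ?R)) (\<lambda>x. \<lambda>l\<in>{1..L}. x l) = distr ?E ?E (\<lambda>x. x)"
      unfolding exp_measure_def by (rule distr_cong) (auto simp: space_PiM PiE_def extensional_def restrict_def fun_eq_iff)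
    also have "\<dots> = ?E" by simp
    also have "\<dots> = PiM {1..L} (\<lambda>l. distr ?E ?R (\<lambda>\<omega>. \<omega> l))"
      unfolding exp_measure_def by (intro PiM_cong refl distr_PiM_component[symmetric] R) auto
    finally show "distr ?E (PiM {1..L} (\<lambda>_. ?R)) (\<lambda>x. \<lambda>l\<in>{1..L}. x l) = PiM {1..L} (\<lambda>l. distr ?E ?R (\<lambda>\<omega>. \<omega> l))" .
  qed
  have ind: "prob_space.indep_vars ?E (\<lambda>_. borel) ?X {1..L}"
    using prob_space.indep_vars_compose2[OF E indc, where Y = "\<lambda>_ x. S_hat K (snd x)" and N = "\<lambda>_. borel", OF Ym] .
  have distrX: "distr ?E borel (?X l) = distr ?E borel (?X 1)" if "l \<in> {1..L}" for l
  proof -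
    have a: "distr ?E borel (?X l) = distr ?R borel (\<lambda>x. S_hat K (snd x))" if "l \<in> {1..L}" for l
    proof -
      have "distr ?E borel (?X l) = distr ?E borel ((\<lambda>x. S_hat K (snd x)) \<circ> (\<lambda>\<omega>. \<omega> l))" by (simp add: comp_def)
      also have "\<dots> = distr (distr ?E ?R (\<lambda>\<omega>. \<omega> l)) borel (\<lambda>x. S_hat K (snd x))"
        by (rule distr_distr[symmetric, OF Ym comp_m[OF that]])
      also have "distr ?E ?R (\<lambda>\<omega>. \<omega> l) = ?R"
        unfolding exp_measure_def by (rule distr_PiM_component[OF R that])
      finally show ?thesis .
    qed
    have "1 \<in> {1..L}" using L by simp
    from a[OF this] a[OF that] show ?thesis by (simp only:)
  qed
  have rvY: "?X 1 \<in> ?E \<rightarrow>\<^sub>M borel"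
    by (rule measurable_compose[OF comp_m Ym]) (use L in simp)
  have AEY: "AE x in ?E. ?X 1 x \<in> {0..1}"
    by (rule AE_I2) (simp add: S_hat_nonneg S_hat_le1[OF K])
  have iid: "iid_interval_bounded_random_variables ?E {1..L} ?X (?X 1) 0 1"
    unfolding iid_interval_bounded_random_variables_def iid_interval_bounded_random_variables_axioms_def
  proof (intro conjI allI impI)
    show "prob_space ?E" by (rule E)
    show "finite {1..L}" by simp
    show "prob_space.indep_vars ?E (\<lambda>_. borel) ?X {1..L}" by (rule ind)
    show "distr ?E borel (?X i) = distr ?E borel (?X 1)" if "i \<in> {1..L}" for i by (rule distrX[OF that])
    show "?X 1 \<in> ?E \<rightarrow>\<^sub>M borel" by (rule rvY)
    show "AE x in ?E. ?X 1 x \<in> {0..1}" by (rule AEY)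
  qed
  interpret H: Hoeffding_ineq_iid ?E "{1..L}" ?X "?X 1" "0::real" "1::real" "integral\<^sup>L ?E (?X 1)"
    unfolding Hoeffding_ineq_iid_def by (intro conjI iid) (rule reflexive)
  have EX1: "integral\<^sup>L ?E (?X 1) = e"
  proof -
    have l1: "(1::nat) \<in> {1..L}" using L by simp
    show ?thesis unfolding e_def by (rule part1(2)[OF h S pure K L l1])
  qed
  have kpos: "k > 0" by (simp add: k_def)
  have conc: "conc_ent n \<psi> S = 1 - k * e"
    by (simp add: conc_ent_def e_def k_def power_divide)
  define \<epsilon>' where "\<epsilon>' = \<epsilon> / k"
  have eps': "\<epsilon>' \<ge> 0" using eps kpos by (simp add: \<epsilon>'_def)
  have cardL: "card {1..L} = L" by simp
  have set_eq: "{\<omega> \<in> space ?E. \<bar>C_hat S K L \<omega> - conc_ent n \<psi> S\<bar> \<ge> \<epsilon>}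
      = {x \<in> space ?E. \<bar>(\<Sum>i\<in>{1..L}. ?X i x) / real (card {1..L}) - integral\<^sup>L ?E (?X 1)\<bar> \<ge> \<epsilon>'}"
  proof (rule Collect_cong, rule conj_cong[OF refl])
    fix \<omega> :: "nat \<Rightarrow> (nat \<Rightarrow> mat2) \<times> (nat \<Rightarrow> bits)"
    let ?a = "(\<Sum>i\<in>{1..L}. ?X i \<omega>) / real L"
    have "C_hat S K L \<omega> - conc_ent n \<psi> S = k * (e - ?a)"
      unfolding conc by (simp add: C_hat_def k_def algebra_simps)
    hence "\<bar>C_hat S K L \<omega> - conc_ent n \<psi> S\<bar> = k * \<bar>?a - e\<bar>"
      using kpos by (simp add: abs_mult abs_minus_commute)
    hence "(\<bar>C_hat S K L \<omega> - conc_ent n \<psi> S\<bar> \<ge> \<epsilon>) \<longleftrightarrow> (\<bar>?a - e\<bar> \<ge> \<epsilon>')"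
      using kpos by (simp add: \<epsilon>'_def pos_divide_le_eq mult.commute)
    thus "(\<bar>C_hat S K L \<omega> - conc_ent n \<psi> S\<bar> \<ge> \<epsilon>) \<longleftrightarrow>
      (\<bar>(\<Sum>i\<in>{1..L}. ?X i \<omega>) / real (card {1..L}) - integral\<^sup>L ?E (?X 1)\<bar> \<ge> \<epsilon>')"
      unfolding cardL EX1 .
  qed
  have Hb: "measure ?E {x \<in> space ?E. \<bar>(\<Sum>i\<in>{1..L}. ?X i x) / real (card {1..L}) - integral\<^sup>L ?E (?X 1)\<bar> \<ge> \<epsilon>'}
      \<le> 2 * exp (- 2 * real (card {1..L}) * \<epsilon>'\<^sup>2 / (1 - 0)\<^sup>2)"
    by (rule H.Hoeffding_ineq_abs_ge'[OF eps']) (use L in auto)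
  have k2: "k^2 = (9/4) ^ card S"
    by (simp add: k_def power2_eq_square power_mult_distrib[symmetric])
  have lnpos: "ln (2 / \<delta>) > 0" using d0 d1 by simp
  have "2 * real L * \<epsilon>'\<^sup>2 = 2 * real L * \<epsilon>^2 / (9/4) ^ card S"
    by (simp add: \<epsilon>'_def power_divide k2)
  also have "\<dots> \<ge> ln (2 / \<delta>)"
  proof -
    have p: "(9/4::real) ^ card S > 0" "\<epsilon>^2 > 0" using eps by auto
    have "ln (2 / \<delta>) = 2 * ((1/2) * (9/4) ^ card S * ln (2 / \<delta>) / \<epsilon>^2) * \<epsilon>^2 / (9/4) ^ card S"
      using p by (simp add: field_simps)
    also have "\<dots> \<le> 2 * real L * \<epsilon>^2 / (9/4) ^ card S"
      using Lbig p by (intro divide_right_mono mult_right_mono mult_left_mono) auto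
    finally show ?thesis .
  qed
  finally have expo: "- 2 * real L * \<epsilon>'\<^sup>2 \<le> - ln (2 / \<delta>)" by simp
  have "2 * exp (- 2 * real (card {1..L}) * \<epsilon>'\<^sup>2 / (1 - 0)\<^sup>2) = 2 * exp (- 2 * real L * \<epsilon>'\<^sup>2)"
    by simp
  also have "\<dots> \<le> 2 * exp (- ln (2 / \<delta>))" using expo by simp
  also have "\<dots> = \<delta>" using d0 by (simp add: exp_minus)
  finally show ?thesis using Hb set_eq by simp
qed

theorem theorem1:
  shows "(\<forall>n \<psi> S K L \<mu>.
            pure_state n \<psi> \<and> S \<subseteq> {1..n} \<and> S \<noteq> {} \<and> K \<ge> 2 \<and> L \<ge> 1 \<and> haar_U2 \<mu> \<longrightarrow>
              integrable (exp_measure n S K L \<mu> \<psi>) (C_hat S K L) \<and>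
              (\<integral>\<omega>. C_hat S K L \<omega> \<partial>exp_measure n S K L \<mu> \<psi>) = conc_ent n \<psi> S)
       \<and> (\<exists>c>0. \<forall>n \<psi> S K L \<mu> (\<epsilon>::real) (\<delta>::real).
            pure_state n \<psi> \<and> S \<subseteq> {1..n} \<and> S \<noteq> {} \<and> K \<ge> 2 \<and> L \<ge> 1 \<and> haar_U2 \<mu> \<and>
            \<epsilon> > 0 \<and> 0 < \<delta> \<and> \<delta> < 1 \<and>
            real L \<ge> c * (9/4) ^ card S * ln (2 / \<delta>) / \<epsilon>^2 \<longrightarrow>
              measure (exp_measure n S K L \<mu> \<psi>)
                {\<omega> \<in> space (exp_measure n S K L \<mu> \<psi>). \<bar>C_hat S K L \<omega> - conc_ent n \<psi> S\<bar> \<ge> \<epsilon>} \<le> \<delta>)"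
proof (rule conjI)
  show "\<forall>n \<psi> S K L \<mu>.
            pure_state n \<psi> \<and> S \<subseteq> {1..n} \<and> S \<noteq> {} \<and> K \<ge> 2 \<and> L \<ge> 1 \<and> haar_U2 \<mu> \<longrightarrow>
              integrable (exp_measure n S K L \<mu> \<psi>) (C_hat S K L) \<and>
              (\<integral>\<omega>. C_hat S K L \<omega> \<partial>exp_measure n S K L \<mu> \<psi>) = conc_ent n \<psi> S"
  proof (intro allI impI)
    fix n :: nat and \<psi> :: qstate and S :: "nat set" and K L :: nat and \<mu> :: "mat2 measure"
    assume a: "pure_state n \<psi> \<and> S \<subseteq> {1..n} \<and> S \<noteq> {} \<and> K \<ge> 2 \<and> L \<ge> 1 \<and> haar_U2 \<mu>"
    show "integrable (exp_measure n S K L \<mu> \<psi>) (C_hat S K L) \<and>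
              (\<integral>\<omega>. C_hat S K L \<omega> \<partial>exp_measure n S K L \<mu> \<psi>) = conc_ent n \<psi> S"
      by (rule part1(1)) (use a in auto)
  qed
  show "\<exists>c>0. \<forall>n \<psi> S K L \<mu> (\<epsilon>::real) (\<delta>::real).
            pure_state n \<psi> \<and> S \<subseteq> {1..n} \<and> S \<noteq> {} \<and> K \<ge> 2 \<and> L \<ge> 1 \<and> haar_U2 \<mu> \<and>
            \<epsilon> > 0 \<and> 0 < \<delta> \<and> \<delta> < 1 \<and>
            real L \<ge> c * (9/4) ^ card S * ln (2 / \<delta>) / \<epsilon>^2 \<longrightarrow>
              measure (exp_measure n S K L \<mu> \<psi>)
                {\<omega> \<in> space (exp_measure n S K L \<mu> \<psi>). \<bar>C_hat S K L \<omega> - conc_ent n \<psi> S\<bar> \<ge> \<epsilon>} \<le> \<delta>"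
  proof (rule exI[of _ "1/2"], intro conjI allI impI)
    show "(0::real) < 1/2" by simp
    fix n :: nat and \<psi> :: qstate and S :: "nat set" and K L :: nat and \<mu> :: "mat2 measure" and \<epsilon> \<delta> :: real
    assume a: "pure_state n \<psi> \<and> S \<subseteq> {1..n} \<and> S \<noteq> {} \<and> K \<ge> 2 \<and> L \<ge> 1 \<and> haar_U2 \<mu> \<and>
            \<epsilon> > 0 \<and> 0 < \<delta> \<and> \<delta> < 1 \<and>
            real L \<ge> 1/2 * (9/4) ^ card S * ln (2 / \<delta>) / \<epsilon>^2"
    show "measure (exp_measure n S K L \<mu> \<psi>)
                {\<omega> \<in> space (exp_measure n S K L \<mu> \<psi>). \<bar>C_hat S K L \<omega> - conc_ent n \<psi> S\<bar> \<ge> \<epsilon>} \<le> \<delta>"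
      by (rule part2) (use a in auto)
  qed
qed

end
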